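(* Let $\sigma>0$ and let $f$ be $(\sigma',2)$-Gevrey regular on $[0,1]$ for some $\sigma'>\sigma$. Then the multiplication map $X^\sigma\to Y^\sigma$, $u\mapsto fu$, is compact.
   Context: Let $I=(0,1)$. A function $u\in C^\infty(\overline I)$ is $(\sigma,k)$-Gevrey regular ($\sigma,k>0$) if there is $C>0$ with $\sup_{x\in I}|u^{(n)}(x)|\le C\sigma^{-n}(n!)^k$ for all $n\ge0$. For $\sigma>0$, $u\in C^\infty(\overline I)$, integers $0\le N\le M$, $k\in\{0,1,2\}$, $l\in\{0,1\}$, set $|u|^{N,M}_{\sigma,k,l}=\big(\sum_{n=N}^M\frac{\sigma^{2n}}{n!^2(n+1)!^2}n^{k+l}\int_0^1(x/\sigma)^k|\partial_x^nu|^2dx\big)^{1/2}$ (with $0^0:=1$), $|u|^N_{\sigma,k,l}$ the same with $M=\infty$; $\|u\|_{\sigma,0,0}=|u|^0_{\sigma,0,0}$. Boundary seminorms: $[u]^{N,M}_\sigma=(\sum_{n=N}^M\frac{\sigma^{2n+1}}{n!^2(n+1)!^2}|u^{(n)}(0)|^2)^{1/2}$, $[u]^N_\sigma$ the same with $M=\infty$. $X^\sigma=\{u\in C^\infty(\overline I):u(1)=0,\ \|\partial_xu\|_{\sigma,0,0}+|\partial_xu|^0_{\sigma,1,0}+|\partial_xu|^0_{\sigma,2,0}+[\partial_xu]^0_\sigma<\infty\}$ and $Y^\sigma=\{u\in C^\infty(\overline I):\|u\|_{\sigma,0,0}+|u|^0_{\sigma,1,0}+[u]^0_\sigma<\infty\}$,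 Hilbert spaces with norms $\|u\|_{X^\sigma}=(\|\partial_xu\|_{\sigma,0,0}^2+(|\partial_xu|^0_{\sigma,1,0})^2+(|\partial_xu|^0_{\sigma,2,0})^2+([\partial_xu]^0_\sigma)^2)^{1/2}$, $\|u\|_{Y^\sigma}=(\|u\|_{\sigma,0,0}^2+(|u|^0_{\sigma,1,0})^2+([u]^0_\sigma)^2)^{1/2}$. *)

theory Defs
  imports "HOL-Analysis.Analysis"
begin

definition is_deriv_seq :: "(real \<Rightarrow> real) \<Rightarrow> (nat \<Rightarrow> real \<Rightarrow> real) \<Rightarrow> bool" where
  "is_deriv_seq u D \<longleftrightarrow> (\<forall>x\<in>{0..1}. D 0 x = u x) \<and>
     (\<forall>n. \<forall>x\<in>{0..1}. (D n has_real_derivative D (Suc n) x) (at x within {0..1}))"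

definition smooth01 :: "(real \<Rightarrow> real) \<Rightarrow> bool" where
  "smooth01 u \<longleftrightarrow> (\<exists>D. is_deriv_seq u D)"

text \<open>The n-th derivative u^(n) on [0,1] (uniquely determined there).\<close>
definition dn :: "(real \<Rightarrow> real) \<Rightarrow> nat \<Rightarrow> real \<Rightarrow> real" where
  "dn u n = (SOME D. is_deriv_seq u D) n"

definition dx :: "(real \<Rightarrow> real) \<Rightarrow> real \<Rightarrow> real" where
  "dx u = dn u 1"

definition gevrey :: "real \<Rightarrow> real \<Rightarrow> (real \<Rightarrow> real) \<Rightarrow> bool" where
  "gevrey \<sigma> k u \<longleftrightarrow> smooth01 u \<and>
     (\<exists>C>0. \<forall>n. \<forall>x\<in>{0<..<1}. \<bar>dn u n x\<bar> \<le> C * \<sigma> powr (- real n) * (fact n) powr k)"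

definition gterm :: "real \<Rightarrow> nat \<Rightarrow> nat \<Rightarrow> (real \<Rightarrow> real) \<Rightarrow> nat \<Rightarrow> real" where
  "gterm \<sigma> k l u n = \<sigma> ^ (2*n) / ((fact n)^2 * (fact (n+1))^2) * real n ^ (k+l) *
      integral {0..1} (\<lambda>x. (x/\<sigma>) ^ k * (dn u n x)^2)"

definition bterm :: "real \<Rightarrow> (real \<Rightarrow> real) \<Rightarrow> nat \<Rightarrow> real" where
  "bterm \<sigma> u n = \<sigma> ^ (2*n+1) / ((fact n)^2 * (fact (n+1))^2) * (dn u n 0)^2"

definition Xspace :: "real \<Rightarrow> (real \<Rightarrow> real) set" where
  "Xspace \<sigma> = {u. smooth01 u \<and> u 1 = 0 \<and>
     summable (gterm \<sigma> 0 0 (dx u)) \<and> summable (gterm \<sigma> 1 0 (dx u)) \<and>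
     summable (gterm \<sigma> 2 0 (dx u)) \<and> summable (bterm \<sigma> (dx u))}"

definition Xnorm :: "real \<Rightarrow> (real \<Rightarrow> real) \<Rightarrow> real" where
  "Xnorm \<sigma> u = sqrt (suminf (gterm \<sigma> 0 0 (dx u)) + suminf (gterm \<sigma> 1 0 (dx u)) +
     suminf (gterm \<sigma> 2 0 (dx u)) + suminf (bterm \<sigma> (dx u)))"

definition Yspace :: "real \<Rightarrow> (real \<Rightarrow> real) set" where
  "Yspace \<sigma> = {u. smooth01 u \<and>
     summable (gterm \<sigma> 0 0 u) \<and> summable (gterm \<sigma> 1 0 u) \<and> summable (bterm \<sigma> u)}"

definition Ynorm :: "real \<Rightarrow> (real \<Rightarrow> real) \<Rightarrow> real" where
  "Ynorm \<sigma> u = sqrt (suminf (gterm \<sigma> 0 0 u) + suminf (gterm \<sigma> 1 0 u) + suminf (bterm \<sigma> u))"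

text \<open>A map T : X^\<sigma> \<rightarrow> Y^\<sigma> is compact: it maps X^\<sigma> into Y^\<sigma>, and every bounded sequence in
  X^\<sigma> has a subsequence whose image converges in Y^\<sigma> (i.e. bounded sets have relatively
  compact images).\<close>
definition compact_XY :: "real \<Rightarrow> ((real \<Rightarrow> real) \<Rightarrow> (real \<Rightarrow> real)) \<Rightarrow> bool" where
  "compact_XY \<sigma> T \<longleftrightarrow> (\<forall>u\<in>Xspace \<sigma>. T u \<in> Yspace \<sigma>) \<and>
     (\<forall>(u::nat \<Rightarrow> real \<Rightarrow> real) B. (\<forall>n. u n \<in> Xspace \<sigma> \<and> Xnorm \<sigma> (u n) \<le> B) \<longrightarrow>
        (\<exists>r v. strict_mono r \<and> v \<in> Yspace \<sigma> \<and>
           (\<lambda>j. Ynorm \<sigma> (\<lambda>x. T (u (r j)) x - v x)) \<longlonglongrightarrow> 0))"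

end

theory Submission
  imports Defs "HOL-Complex_Analysis.Great_Picard" "HOL-Real_Asymp.Real_Asymp"
begin

lemma deriv01_unique:
  assumes "x \<in> {0..1::real}"
    "(g has_real_derivative a) (at x within {0..1})"
    "(g has_real_derivative b) (at x within {0..1})"
  shows "a = b"
proof -
  have "(0::real) < 1" by simp
  moreover have "x \<in> cbox 0 1" using assms(1) by simp
  ultimately show ?thesis
    using vector_derivative_unique_within_closed_interval[of 0 1 x g a b] assms(2,3)
    by (simp add: has_real_derivative_iff_has_vector_derivative)
qed

lemma smooth_dn: assumes "smooth01 w" shows "is_deriv_seq w (dn w)"
proof -
  have e: "dn w = (SOME D. is_deriv_seq w D)" by (rule ext) (simp add: dn_def)
  show ?thesis unfolding e using assms unfolding smooth01_def by (rule someI_ex)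
qed

lemma dn_eq:
  assumes "is_deriv_seq w D" "x \<in> {0..1}"
  shows "dn w n x = D n x"
proof -
  have E: "is_deriv_seq w (dn w)" using assms(1) smooth_dn smooth01_def by blast
  have "\<forall>x\<in>{0..1}. dn w n x = D n x"
  proof (induction n)
    case 0 then show ?case using E assms(1) unfolding is_deriv_seq_def by simp
  next
    case (Suc n)
    show ?case
    proof
      fix y assume y: "y \<in> {0..(1::real)}"
      have d1: "(dn w n has_real_derivative dn w (Suc n) y) (at y within {0..1})"
        using E y unfolding is_deriv_seq_def by blast
      have d2: "(D n has_real_derivative D (Suc n) y) (at y within {0..1})"
        using assms(1) y unfolding is_deriv_seq_def by blast
      have d3: "(dn w n has_real_derivative D (Suc n) y) (at y within {0..1})"
        unfolding has_field_derivative_def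
        by (rule has_derivative_transform[OF y _ d2[unfolded has_field_derivative_def]]) (use Suc.IH in blast)
      show "dn w (Suc n) y = D (Suc n) y" using deriv01_unique[OF y d1 d3] .
    qed
  qed
  then show ?thesis using assms(2) by blast
qed

lemma dn_deriv: "smooth01 w \<Longrightarrow> x \<in> {0..1} \<Longrightarrow> (dn w n has_real_derivative dn w (Suc n) x) (at x within {0..1})"
  using smooth_dn unfolding is_deriv_seq_def by blast

lemma dn_0: "smooth01 w \<Longrightarrow> x \<in> {0..1} \<Longrightarrow> dn w 0 x = w x"
  using smooth_dn unfolding is_deriv_seq_def by blast

lemma dn_cont: "smooth01 w \<Longrightarrow> continuous_on {0..1} (dn w n)"
  unfolding continuous_on_eq_continuous_within using dn_deriv DERIV_continuous by blast

lemma smooth_dx: assumes "smooth01 w" shows "smooth01 (dx w)" and "x \<in> {0..1} \<Longrightarrow> dn (dx w) n x = dn w (Suc n) x"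
proof -
  have "is_deriv_seq (dx w) (\<lambda>n. dn w (Suc n))"
    unfolding is_deriv_seq_def dx_def using dn_deriv[OF assms] by simp
  then show "smooth01 (dx w)" "x \<in> {0..1} \<Longrightarrow> dn (dx w) n x = dn w (Suc n) x"
    unfolding smooth01_def using dn_eq by blast+
qed

definition leib :: "(nat \<Rightarrow> real \<Rightarrow> real) \<Rightarrow> (nat \<Rightarrow> real \<Rightarrow> real) \<Rightarrow> nat \<Rightarrow> real \<Rightarrow> real" where
  "leib F G n x = (\<Sum>i = 0..n. real (n choose i) * F i x * G (n-i) x)"

lemma leib_comb:
  fixes a b :: "nat \<Rightarrow> real"
  shows "(\<Sum>i = 0..n. real (n choose i) * (a (Suc i) * b (n-i) + b (Suc (n-i)) * a i)) =
         (\<Sum>i = 0..Suc n. real (Suc n choose i) * a i * b (Suc n - i))"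
proof -
  have e1: "(\<Sum>i = 0..Suc n. real (Suc n choose i) * a i * b (Suc n - i)) =
     a 0 * b (Suc n) + (\<Sum>i = 0..n. real (n choose i) * a (Suc i) * b (n - i)) + (\<Sum>i = 0..n. real (n choose Suc i) * a (Suc i) * b (n - i))"
    apply (subst sum.atLeast0_atMost_Suc_shift)
    apply (simp only: o_def binomial_Suc_Suc of_nat_add distrib_right sum.distrib diff_Suc_Suc)
    by simp
  have e2: "(\<Sum>i = 0..n. real (n choose i) * a i * b (Suc n - i)) = (\<Sum>i = 0..Suc n. real (n choose i) * a i * b (Suc n - i))"
    by (simp add: sum.atLeast0_atMost_Suc)
  also have "\<dots> = a 0 * b (Suc n) + (\<Sum>i = 0..n. real (n choose Suc i) * a (Suc i) * b (n - i))"
    apply (subst sum.atLeast0_atMost_Suc_shift)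
    by (simp only: o_def diff_Suc_Suc) simp
  finally have e2': "(\<Sum>i = 0..n. real (n choose i) * a i * b (Suc n - i)) = a 0 * b (Suc n) + (\<Sum>i = 0..n. real (n choose Suc i) * a (Suc i) * b (n - i))" .
  have e3: "(\<Sum>i = 0..n. real (n choose i) * (a (Suc i) * b (n-i) + b (Suc (n-i)) * a i)) =
     (\<Sum>i = 0..n. real (n choose i) * a (Suc i) * b (n - i)) + (\<Sum>i = 0..n. real (n choose i) * a i * b (Suc n - i))"
    by (auto simp: algebra_simps sum.distrib Suc_diff_le intro!: sum.cong)
  show ?thesis using e1 e2' e3 by simp
qed

lemma leib_deriv:
  assumes F: "\<And>n x. x \<in> {0..1} \<Longrightarrow> (F n has_real_derivative F (Suc n) x) (at x within {0..1})"
    and G: "\<And>n x. x \<in> {0..1} \<Longrightarrow> (G n has_real_derivative G (Suc n) x) (at x within {0..1})"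
    and x: "x \<in> {0..1}"
  shows "(leib F G n has_real_derivative leib F G (Suc n) x) (at x within {0..1})"
proof -
  have "(leib F G n has_real_derivative
     (\<Sum>i = 0..n. real (n choose i) * (F (Suc i) x * G (n-i) x + G (Suc (n-i)) x * F i x))) (at x within {0..1})"
  proof -
    have "((\<lambda>y. real (n choose i) * F i y * G (n-i) y) has_real_derivative
       real (n choose i) * (F (Suc i) x * G (n-i) x + G (Suc (n-i)) x * F i x)) (at x within {0..1})" for i
    proof -
      have "((\<lambda>y. F i y * G (n-i) y) has_real_derivative F (Suc i) x * G (n-i) x + G (Suc (n-i)) x * F i x) (at x within {0..1})"
        by (rule DERIV_mult[OF F[OF x] G[OF x]])
      from DERIV_cmult[OF this, of "real (n choose i)"] show ?thesis by (simp add: algebra_simps)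
    qed
    then show ?thesis unfolding leib_def by (intro DERIV_sum) auto
  qed
  moreover have "(\<Sum>i = 0..n. real (n choose i) * (F (Suc i) x * G (n-i) x + G (Suc (n-i)) x * F i x)) = leib F G (Suc n) x"
    unfolding leib_def using leib_comb[of n "\<lambda>i. F i x" "\<lambda>i. G i x"] by simp
  ultimately show ?thesis by simp
qed

lemma smooth_mult:
  assumes "smooth01 f" "smooth01 u"
  shows "smooth01 (\<lambda>x. f x * u x)" and "x \<in> {0..1} \<Longrightarrow> dn (\<lambda>x. f x * u x) n x = leib (dn f) (dn u) n x"
proof -
  have "is_deriv_seq (\<lambda>x. f x * u x) (leib (dn f) (dn u))"
    unfolding is_deriv_seq_def
    using leib_deriv[of "dn f" "dn u", OF dn_deriv[OF assms(1)] dn_deriv[OF assms(2)]] dn_0[OF assms(1)] dn_0[OF assms(2)]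
    by (simp add: leib_def)
  then show "smooth01 (\<lambda>x. f x * u x)" "x \<in> {0..1} \<Longrightarrow> dn (\<lambda>x. f x * u x) n x = leib (dn f) (dn u) n x"
    unfolding smooth01_def using dn_eq by blast+
qed

lemma smooth_diff:
  assumes "smooth01 f" "smooth01 u"
  shows "smooth01 (\<lambda>x. f x - u x)" and "x \<in> {0..1} \<Longrightarrow> dn (\<lambda>x. f x - u x) n x = dn f n x - dn u n x"
proof -
  have "is_deriv_seq (\<lambda>x. f x - u x) (\<lambda>n x. dn f n x - dn u n x)"
    unfolding is_deriv_seq_def
    using DERIV_diff[OF dn_deriv[OF assms(1)] dn_deriv[OF assms(2)]] dn_0[OF assms(1)] dn_0[OF assms(2)]
    by simp
  then show "smooth01 (\<lambda>x. f x - u x)" "x \<in> {0..1} \<Longrightarrow> dn (\<lambda>x. f x - u x) n x = dn f n x - dn u n x"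
    unfolding smooth01_def using dn_eq by blast+
qed

definition cc :: "real \<Rightarrow> nat \<Rightarrow> real" where
  "cc s m = s^(2*m) / ((fact m)^2 * (fact (m+1))^2)"

lemma cc_pos: "s > 0 \<Longrightarrow> cc s m > 0"
  unfolding cc_def by (simp add: zero_less_power)

lemma cc_0: "cc s 0 = 1" unfolding cc_def by simp

lemma gterm00: "gterm \<sigma> 0 0 u n = cc \<sigma> n * integral {0..1} (\<lambda>x. (dn u n x)^2)"
  unfolding gterm_def cc_def by simp

lemma gterm10: "gterm \<sigma> 1 0 u n = cc \<sigma> n * real n * integral {0..1} (\<lambda>x. (x/\<sigma>) * (dn u n x)^2)"
  unfolding gterm_def cc_def by simp

lemma bterm_eq: "bterm \<sigma> u n = \<sigma> * cc \<sigma> n * (dn u n 0)^2"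
  unfolding bterm_def cc_def by (simp add: power_add)

lemma cont_int: fixes g :: "real \<Rightarrow> real" shows "continuous_on {0..1} g \<Longrightarrow> g integrable_on {0..1::real}"
  by (rule integrable_continuous_real)

lemma int_sq_nonneg: fixes g :: "real \<Rightarrow> real" shows "continuous_on {0..1} g \<Longrightarrow> 0 \<le> integral {0..1::real} (\<lambda>x. (g x)^2)"
  by (rule integral_nonneg) (auto intro!: cont_int continuous_intros)

lemma int_w_bounds:
  fixes g :: "real \<Rightarrow> real"
  assumes g: "continuous_on {0..1} g" and s: "\<sigma> > 0"
  shows "0 \<le> integral {0..1::real} (\<lambda>x. (x/\<sigma>) * (g x)^2)"
    and "integral {0..1::real} (\<lambda>x. (x/\<sigma>) * (g x)^2) \<le> (1/\<sigma>) * integral {0..1} (\<lambda>x. (g x)^2)"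
proof -
  have i1: "(\<lambda>x. (x/\<sigma>) * (g x)^2) integrable_on {0..1}"
    using s by (intro cont_int continuous_intros g) auto
  have i2: "(\<lambda>x. (1/\<sigma>) * (g x)^2) integrable_on {0..1}"
    using s by (intro cont_int continuous_intros g) auto
  show "0 \<le> integral {0..1::real} (\<lambda>x. (x/\<sigma>) * (g x)^2)"
    by (rule integral_nonneg[OF i1]) (use s in auto)
  have "integral {0..1::real} (\<lambda>x. (x/\<sigma>) * (g x)^2) \<le> integral {0..1} (\<lambda>x. (1/\<sigma>) * (g x)^2)"
    by (rule integral_le[OF i1 i2]) (use s in \<open>auto intro!: mult_right_mono divide_right_mono mult_left_le_one_le\<close>)
  also have "\<dots> = (1/\<sigma>) * integral {0..1} (\<lambda>x. (g x)^2)" by simp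
  finally show "integral {0..1::real} (\<lambda>x. (x/\<sigma>) * (g x)^2) \<le> (1/\<sigma>) * integral {0..1} (\<lambda>x. (g x)^2)" .
qed

lemma ftc_dn:
  assumes w: "smooth01 w" and ab: "0 \<le> a" "a \<le> b" "b \<le> 1"
  shows "(dn w (Suc m) has_integral (dn w m b - dn w m a)) {a..b}"
proof (rule fundamental_theorem_of_calculus[OF ab(2)])
  fix x assume x: "x \<in> {a..b}"
  then have "x \<in> {0..1}" using ab by auto
  from dn_deriv[OF w this, of m] have "(dn w m has_real_derivative dn w (Suc m) x) (at x within {a..b})"
    by (rule DERIV_subset) (use ab in auto)
  then show "(dn w m has_vector_derivative dn w (Suc m) x) (at x within {a..b})"
    by (simp add: has_real_derivative_iff_has_vector_derivative)
qed

lemma abs_int_le: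
  fixes g :: "real \<Rightarrow> real"
  assumes g: "continuous_on {0..1} g" and ab: "0 \<le> a" "a \<le> b" "b \<le> 1"
  shows "\<bar>integral {a..b} g\<bar> \<le> (1 + integral {0..1::real} (\<lambda>x. (g x)^2)) / 2"
proof -
  have sub: "{a..b} \<subseteq> {0..1}" using ab by auto
  have gc: "continuous_on {a..b} g" using continuous_on_subset[OF g sub] .
  have i1: "g integrable_on {a..b}" by (rule integrable_continuous_real[OF gc])
  have h: "(\<lambda>x. (1 + (g x)^2)/2) integrable_on {a..b}"
    by (intro integrable_continuous_real continuous_intros gc) auto
  have hn: "(\<lambda>x. - ((1 + (g x)^2)/2)) integrable_on {a..b}"
    by (intro integrable_continuous_real continuous_intros gc) auto
  have h01: "(\<lambda>x. (1 + (g x)^2)/2) integrable_on {0..1}"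
    by (intro integrable_continuous_real continuous_intros g) auto
  have pt: "\<bar>y\<bar> \<le> (1 + y^2)/2" for y :: real
    using sum_squares_ge_zero[of "\<bar>y\<bar> - 1" 0] by (auto simp: power2_eq_square algebra_simps abs_mult_self_eq)
  have "integral {a..b} g \<le> integral {a..b} (\<lambda>x. (1 + (g x)^2)/2)"
    by (rule integral_le[OF i1 h]) (use pt in \<open>metis abs_le_D1\<close>)
  moreover have "integral {a..b} (\<lambda>x. - ((1 + (g x)^2)/2)) \<le> integral {a..b} g"
    by (rule integral_le[OF hn i1]) (use pt in \<open>metis abs_le_D2 minus_le_iff\<close>)
  moreover have "integral {a..b} (\<lambda>x. (1 + (g x)^2)/2) \<le> integral {0..1} (\<lambda>x. (1 + (g x)^2)/2)"
    by (rule integral_subset_le[OF sub h h01]) (auto intro: add_nonneg_nonneg)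
  moreover have "integral {0..1::real} (\<lambda>x. (1 + (g x)^2)/2) = (1 + integral {0..1::real} (\<lambda>x. (g x)^2)) / 2"
  proof -
    have gi: "(\<lambda>x. (g x)^2) integrable_on {0..1}" by (intro cont_int continuous_intros g)
    have "integral {0..1::real} (\<lambda>x. (1 + (g x)^2)/2) = integral {0..1} (\<lambda>x. 1 + (g x)^2) / 2"
      by simp
    also have "integral {0..1::real} (\<lambda>x. 1 + (g x)^2) = 1 + integral {0..1::real} (\<lambda>x. (g x)^2)"
      using integral_add[OF integrable_const_ivl gi, of 1] by simp
    finally show ?thesis .
  qed
  moreover have "integral {a..b} (\<lambda>x. - ((1 + (g x)^2)/2)) = - integral {a..b} (\<lambda>x. (1 + (g x)^2)/2)"
    by (rule integral_neg)
  ultimately show ?thesis by linarith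
qed

lemma bound_closed:
  fixes g :: "real \<Rightarrow> real"
  assumes g: "continuous_on {0..1} g" and b: "\<And>y. y \<in> {0<..<1} \<Longrightarrow> \<bar>g y\<bar> \<le> K"
    and x: "x \<in> {0..1}"
  shows "\<bar>g x\<bar> \<le> K"
proof -
  define y where "y j = x + (1/2 - x) * inverse (real j + 2)" for j :: nat
  have yin: "y j \<in> {0<..<1}" for j
  proof -
    define t where "t = inverse (real j + 2)"
    have t: "0 < t" "t \<le> 1/2" unfolding t_def by (auto simp: field_simps)
    have e: "y j = (1 - t) * x + t / 2"
      unfolding y_def t_def by (simp add: algebra_simps)
    have "0 \<le> (1 - t) * x" using t x by auto
    moreover have "(1 - t) * x \<le> 1 - t" using t x
      by (intro mult_left_le) auto
    ultimately have "0 < (1 - t) * x + t / 2" "(1 - t) * x + t / 2 < 1" using t by linarith+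
    then show ?thesis unfolding e by auto
  qed
  have "(\<lambda>j. (1/2 - x) * inverse (real j + 2)) \<longlonglongrightarrow> 0"
  proof -
    have "(\<lambda>j. (1/2 - x) * inverse (real j + 2)) \<longlonglongrightarrow> (1/2 - x) * 0"
      by (intro tendsto_mult tendsto_const) real_asymp
    then show ?thesis by simp
  qed
  then have yl: "y \<longlonglongrightarrow> x" unfolding y_def using tendsto_add[OF tendsto_const, of _ 0 sequentially x] by simp
  have "(\<lambda>j. g (y j)) \<longlonglongrightarrow> g x"
    by (rule continuous_on_tendsto_compose[OF g yl x]) (use yin in \<open>auto intro!: always_eventually less_imp_le\<close>)
  then have "(\<lambda>j. \<bar>g (y j)\<bar>) \<longlonglongrightarrow> \<bar>g x\<bar>" by (rule tendsto_rabs)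
  then show ?thesis
    by (rule tendsto_upperbound) (use b yin in \<open>auto intro!: always_eventually\<close>)
qed

lemma gev_bound:
  assumes g: "gevrey \<sigma>' 2 f" and s: "\<sigma>' > 0"
  obtains C where "C > 0" "smooth01 f" "\<And>n x. x \<in> {0..1} \<Longrightarrow> \<bar>dn f n x\<bar> \<le> C * (fact n)^2 / \<sigma>'^n"
proof -
  obtain C where C: "C > 0" and sm: "smooth01 f"
    and b: "\<And>n x. x \<in> {0<..<1} \<Longrightarrow> \<bar>dn f n x\<bar> \<le> C * \<sigma>' powr (- real n) * (fact n) powr 2"
    using g unfolding gevrey_def by blast
  have e: "C * \<sigma>' powr (- real n) * (fact n) powr 2 = C * (fact n)^2 / \<sigma>'^n" for n
  proof -
    have a: "\<sigma>' powr (- real n) = inverse (\<sigma>'^n)" using s by (simp add: powr_minus powr_realpow)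
    have b: "(fact n :: real) powr 2 = (fact n)^2"
      using powr_numeral[of "fact n :: real" "num.Bit0 num.One"] by simp
    show ?thesis unfolding a b by (simp add: divide_inverse)
  qed
  have "\<bar>dn f n x\<bar> \<le> C * (fact n)^2 / \<sigma>'^n" if "x \<in> {0..1}" for n x
    by (rule bound_closed[OF dn_cont[OF sm] _ that]) (use b e in auto)
  then show ?thesis using that C sm by blast
qed

definition Pm :: "real \<Rightarrow> real \<Rightarrow> nat \<Rightarrow> real" where
  "Pm \<sigma> K m = (if m = 0 then ((1+K)/2)^2 else K * (1 + 1/\<sigma>) / cc \<sigma> (m-1))"

definition gam :: "real \<Rightarrow> (nat \<Rightarrow> real) \<Rightarrow> real \<Rightarrow> nat \<Rightarrow> real" where
  "gam \<sigma> Fb K n = (1 + real n/\<sigma> + \<sigma>) * (real n + 1) * cc \<sigma> n *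
     (\<Sum>j=0..n. (real (n choose j))^2 * (Fb j)^2 * Pm \<sigma> K (n-j))"

lemma P1:
  assumes s: "\<sigma> > 0" and w: "smooth01 w" and w1: "w 1 = 0" and K: "K \<ge> 0"
    and h1: "\<And>m. cc \<sigma> m * integral {0..1} (\<lambda>x. (dn w (Suc m) x)^2) \<le> K"
    and h2: "\<And>m. \<sigma> * cc \<sigma> m * (dn w (Suc m) 0)^2 \<le> K"
  shows "integral {0..1} (\<lambda>x. (dn w m x)^2) \<le> Pm \<sigma> K m \<and> (dn w m 0)^2 \<le> Pm \<sigma> K m"
proof (cases m)
  case (Suc k)
  have c: "cc \<sigma> k > 0" using cc_pos[OF s] .
  have A: "K / cc \<sigma> k \<le> Pm \<sigma> K m"
  proof -
    have "K / cc \<sigma> k * 1 \<le> K / cc \<sigma> k * (1 + 1/\<sigma>)"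
      using c K s by (intro mult_left_mono) auto
    then show ?thesis using Suc by (simp add: Pm_def)
  qed
  have "integral {0..1} (\<lambda>x. (dn w (Suc k) x)^2) \<le> K / cc \<sigma> k"
    using h1[of k] c by (simp add: pos_le_divide_eq ac_simps)
  then have i: "integral {0..1} (\<lambda>x. (dn w m x)^2) \<le> K / cc \<sigma> k" using Suc by simp
  have "(dn w (Suc k) 0)^2 \<le> K / (\<sigma> * cc \<sigma> k)"
    using h2[of k] c s by (simp add: pos_le_divide_eq ac_simps)
  moreover have "K / (\<sigma> * cc \<sigma> k) = K / cc \<sigma> k * (1/\<sigma>)" by simp
  ultimately have "(dn w m 0)^2 \<le> K / cc \<sigma> k * (1/\<sigma>)" using Suc by simp
  note i this
  moreover have "K / cc \<sigma> k * (1/\<sigma>) \<le> Pm \<sigma> K m"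
  proof -
    have "K / cc \<sigma> k * (1/\<sigma>) \<le> K / cc \<sigma> k * (1 + 1/\<sigma>)"
      using c K s by (intro mult_left_mono) auto
    then show ?thesis using Suc by (simp add: Pm_def)
  qed
  ultimately show ?thesis using A by linarith
next
  case 0
  have I1: "integral {0..1} (\<lambda>x. (dn w 1 x)^2) \<le> K" using h1[of 0] by (simp add: cc_0)
  have bd: "\<bar>dn w 0 x\<bar> \<le> (1+K)/2" if x: "x \<in> {0..1}" for x
  proof -
    have "(dn w (Suc 0) has_integral (dn w 0 1 - dn w 0 x)) {x..1}"
      by (rule ftc_dn[OF w]) (use x in auto)
    then have "integral {x..1} (dn w (Suc 0)) = dn w 0 1 - dn w 0 x" by (rule integral_unique)
    moreover have "dn w 0 1 = 0" using dn_0[OF w, of 1] w1 by simp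
    moreover have "\<bar>integral {x..1} (dn w (Suc 0))\<bar> \<le> (1 + integral {0..1} (\<lambda>x. (dn w (Suc 0) x)^2)) / 2"
      by (rule abs_int_le[OF dn_cont[OF w]]) (use x in auto)
    ultimately have "\<bar>dn w 0 x\<bar> \<le> (1 + integral {0..1} (\<lambda>x. (dn w (Suc 0) x)^2)) / 2" by simp
    then show ?thesis using I1 by simp
  qed
  have sq: "(dn w 0 x)^2 \<le> ((1+K)/2)^2" if "x \<in> {0..1}" for x
  proof -
    have "\<bar>dn w 0 x\<bar> \<le> \<bar>(1+K)/2\<bar>" using bd[OF that] K by simp
    then show ?thesis by (simp only: abs_le_square_iff)
  qed
  have "integral {0..1} (\<lambda>x. (dn w 0 x)^2) \<le> integral {0..1} (\<lambda>x::real. ((1+K)/2::real)^2)"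
  proof -
    have i1: "(\<lambda>x. (dn w 0 x)^2) integrable_on {0..1}"
      by (intro cont_int continuous_intros dn_cont[OF w])
    have i2: "(\<lambda>x. ((1+K)/2::real)^2) integrable_on {0..1::real}" by (rule integrable_const_ivl)
    show ?thesis by (rule integral_le[OF i1 i2]) (use sq in auto)
  qed
  also have "\<dots> = ((1+K)/2)^2" by simp
  finally show ?thesis using sq[of 0] 0 by (simp add: Pm_def)
qed

lemma P2:
  assumes fb: "\<And>j. \<bar>dn f j x\<bar> \<le> Fb j"
  shows "(leib (dn f) (dn w) n x)^2 \<le> (real n + 1) * (\<Sum>j=0..n. (real (n choose j))^2 * (Fb j)^2 * (dn w (n-j) x)^2)"
proof -
  have "(leib (dn f) (dn w) n x)^2 = (\<Sum>j=0..n. (real (n choose j) * dn f j x * dn w (n-j) x) * 1)^2"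
    unfolding leib_def by simp
  also have "\<dots> \<le> (\<Sum>j=0..n. (real (n choose j) * dn f j x * dn w (n-j) x)^2) * (\<Sum>j=0..n. (1::real)^2)"
    by (rule Cauchy_Schwarz_ineq_sum)
  also have "\<dots> = (\<Sum>j=0..n. (real (n choose j) * dn f j x * dn w (n-j) x)^2) * (real n + 1)"
  proof -
    have "(\<Sum>j=0..n. (1::real)^2) = real n + 1" by simp
    then show ?thesis by (simp only:)
  qed
  also have "\<dots> \<le> (\<Sum>j=0..n. (real (n choose j))^2 * (Fb j)^2 * (dn w (n-j) x)^2) * (real n + 1)"
  proof (rule mult_right_mono)
    show "(\<Sum>j=0..n. (real (n choose j) * dn f j x * dn w (n-j) x)^2) \<le> (\<Sum>j=0..n. (real (n choose j))^2 * (Fb j)^2 * (dn w (n-j) x)^2)"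
    proof (rule sum_mono)
      fix j
      have "\<bar>dn f j x\<bar> \<le> \<bar>Fb j\<bar>" using fb[of j] by linarith
      then have "(dn f j x)^2 \<le> (Fb j)^2" by (simp only: abs_le_square_iff)
      then have "(real (n choose j))^2 * (dn f j x)^2 * (dn w (n-j) x)^2 \<le> (real (n choose j))^2 * (Fb j)^2 * (dn w (n-j) x)^2"
        by (intro mult_right_mono mult_left_mono) auto
      then show "(real (n choose j) * dn f j x * dn w (n-j) x)^2 \<le> (real (n choose j))^2 * (Fb j)^2 * (dn w (n-j) x)^2"
        by (simp add: power_mult_distrib)
    qed
  qed auto
  finally show ?thesis by (simp add: mult.commute)
qed

lemma terms_nonneg:
  assumes s: "\<sigma> > 0" and v: "smooth01 v"
  shows "0 \<le> gterm \<sigma> 0 0 v n" "0 \<le> gterm \<sigma> 1 0 v n" "0 \<le> bterm \<sigma> v n"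
proof -
  have c: "cc \<sigma> n > 0" using cc_pos[OF s] .
  show "0 \<le> gterm \<sigma> 0 0 v n" unfolding gterm00
    using c int_sq_nonneg[OF dn_cont[OF v]] by simp
  show "0 \<le> gterm \<sigma> 1 0 v n" unfolding gterm10
    using c int_w_bounds(1)[OF dn_cont[OF v] s, of n] by (intro mult_nonneg_nonneg) auto
  show "0 \<le> bterm \<sigma> v n" unfolding bterm_eq using c s by simp
qed

lemma ring_eq1: "c * Q + c * t * Q + s * c * Q = (1 + t + s) * c * (Q::real)" by algebra
lemma ring_eq2: "a * c * (b * S) = a * b * c * (S::real)" by algebra

lemma core:
  assumes s: "\<sigma> > 0" and f: "smooth01 f" and fb: "\<And>j x. x \<in> {0..1} \<Longrightarrow> \<bar>dn f j x\<bar> \<le> Fb j"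
    and w: "smooth01 w" and w1: "w 1 = 0" and K: "K \<ge> 0"
    and h1: "\<And>m. cc \<sigma> m * integral {0..1} (\<lambda>x. (dn w (Suc m) x)^2) \<le> K"
    and h2: "\<And>m. \<sigma> * cc \<sigma> m * (dn w (Suc m) 0)^2 \<le> K"
  shows "gterm \<sigma> 0 0 (\<lambda>x. f x * w x) n + gterm \<sigma> 1 0 (\<lambda>x. f x * w x) n + bterm \<sigma> (\<lambda>x. f x * w x) n
           \<le> gam \<sigma> Fb K n"
proof -
  define v where "v = (\<lambda>x. f x * w x)"
  have sv: "smooth01 v" unfolding v_def by (rule smooth_mult(1)[OF f w])
  have dv: "dn v n x = leib (dn f) (dn w) n x" if "x \<in> {0..1}" for x
    unfolding v_def by (rule smooth_mult(2)[OF f w that])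
  define Q where "Q = (real n + 1) * (\<Sum>j=0..n. (real (n choose j))^2 * (Fb j)^2 * Pm \<sigma> K (n-j))"
  define R where "R x = (real n + 1) * (\<Sum>j=0..n. (real (n choose j))^2 * (Fb j)^2 * (dn w (n-j) x)^2)" for x
  have PP: "integral {0..1} (\<lambda>x. (dn w m x)^2) \<le> Pm \<sigma> K m \<and> (dn w m 0)^2 \<le> Pm \<sigma> K m" for m
    by (rule P1[OF s w w1 K h1 h2])
  have pt: "(dn v n x)^2 \<le> R x" if x: "x \<in> {0..1}" for x
    unfolding dv[OF x] R_def by (rule P2) (use fb x in auto)
  have intR: "integral {0..1} R = (real n + 1) * (\<Sum>j=0..n. (real (n choose j))^2 * (Fb j)^2 * integral {0..1} (\<lambda>x. (dn w (n-j) x)^2))"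
  proof -
    have "integral {0..1} R = (real n + 1) * integral {0..1} (\<lambda>x. \<Sum>j=0..n. (real (n choose j))^2 * (Fb j)^2 * (dn w (n-j) x)^2)"
      unfolding R_def by (rule integral_mult_right)
    also have "integral {0..1} (\<lambda>x. \<Sum>j=0..n. (real (n choose j))^2 * (Fb j)^2 * (dn w (n-j) x)^2)
       = (\<Sum>j=0..n. integral {0..1} (\<lambda>x. (real (n choose j))^2 * (Fb j)^2 * (dn w (n-j) x)^2))"
      by (rule integral_sum) (auto intro!: cont_int continuous_intros dn_cont[OF w])
    also have "\<dots> = (\<Sum>j=0..n. (real (n choose j))^2 * (Fb j)^2 * integral {0..1} (\<lambda>x. (dn w (n-j) x)^2))"
      by (rule sum.cong) (auto simp: integral_mult_right)
    finally show ?thesis .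
  qed
  have intRQ: "integral {0..1} R \<le> Q"
    unfolding intR Q_def
    by (intro mult_left_mono sum_mono) (use PP in auto)
  have R0Q: "R 0 \<le> Q"
    unfolding R_def Q_def
    by (intro mult_left_mono sum_mono) (use PP in auto)
  have vc: "continuous_on {0..1} (dn v n)" by (rule dn_cont[OF sv])
  have I: "integral {0..1} (\<lambda>x. (dn v n x)^2) \<le> Q"
  proof -
    have i1: "(\<lambda>x. (dn v n x)^2) integrable_on {0..1}"
      by (intro cont_int continuous_intros vc)
    have i2: "R integrable_on {0..1}"
      unfolding R_def by (intro cont_int continuous_intros dn_cont[OF w])
    have "integral {0..1} (\<lambda>x. (dn v n x)^2) \<le> integral {0..1} R"
      by (rule integral_le[OF i1 i2]) (use pt in auto)
    then show ?thesis using intRQ by linarith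
  qed
  have D0: "(dn v n 0)^2 \<le> Q" using pt[of 0] R0Q by auto
  have c: "cc \<sigma> n > 0" using cc_pos[OF s] .
  have g0: "gterm \<sigma> 0 0 v n \<le> cc \<sigma> n * Q" unfolding gterm00
    using I c by (simp add: mult_left_mono)
  have g1: "gterm \<sigma> 1 0 v n \<le> cc \<sigma> n * (real n / \<sigma>) * Q"
  proof -
    have "integral {0..1} (\<lambda>x. (x/\<sigma>) * (dn v n x)^2) \<le> (1/\<sigma>) * integral {0..1} (\<lambda>x. (dn v n x)^2)"
      by (rule int_w_bounds(2)[OF vc s])
    also have "\<dots> \<le> (1/\<sigma>) * Q" using I s by (intro mult_left_mono) auto
    finally have "cc \<sigma> n * real n * integral {0..1} (\<lambda>x. (x/\<sigma>) * (dn v n x)^2) \<le> cc \<sigma> n * real n * ((1/\<sigma>) * Q)"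
      using c by (intro mult_left_mono) auto
    then show ?thesis unfolding gterm10 by simp
  qed
  have b0: "bterm \<sigma> v n \<le> \<sigma> * cc \<sigma> n * Q" unfolding bterm_eq
    using D0 c s by (intro mult_left_mono) auto
  have "gterm \<sigma> 0 0 v n + gterm \<sigma> 1 0 v n + bterm \<sigma> v n \<le> cc \<sigma> n * Q + cc \<sigma> n * (real n / \<sigma>) * Q + \<sigma> * cc \<sigma> n * Q"
    using g0 g1 b0 by linarith
  also have "\<dots> = (1 + real n / \<sigma> + \<sigma>) * cc \<sigma> n * Q"
    by (rule ring_eq1)
  also have "\<dots> = gam \<sigma> Fb K n" unfolding gam_def Q_def by (rule ring_eq2)
  finally show ?thesis unfolding v_def .
qed

lemma fact_mult_le: "fact j * fact k \<le> (fact (j+k) :: real)"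
proof -
  have "fact j * fact k * ((j+k) choose j) = (fact (j+k) :: nat)"
    using binomial_fact_lemma[of j "j+k"] by simp
  moreover have "((j+k) choose j) \<ge> 1" by (simp add: Suc_leI)
  ultimately have "fact j * fact k \<le> (fact (j+k) :: nat)"
    by (metis mult_le_mono2 nat_mult_1_right)
  then show ?thesis by (metis of_nat_fact of_nat_le_iff of_nat_mult)
qed

lemma field_id:
  fixes a b b1 N N1 S1 S2 T s C K :: real
  assumes "a > 0" "b > 0" "b1 > 0" "N > 0" "N1 > 0" "S1 > 0" "S2 > 0" "T > 0" "s > 0"
  shows "S1 * S2 * s^2 / (N^2 * N1^2) * (N / (a * b1))^2 * (C * a^2 / T)^2 * (K * (1 + 1/s) / (S2 / (b^2 * b1^2)))
       = C^2 * K * (1 + 1/s) * s^2 * (S1 / T^2) * (a * b / N1)^2"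
  using assms by (simp add: field_simps power2_eq_square)

lemma term_bound:
  assumes s: "\<sigma> > 0" and s': "\<sigma>' > 0" and jn: "j < n"
  shows "cc \<sigma> n * (real (n choose j))^2 * (C * (fact j)^2 / \<sigma>'^j)^2 * Pm \<sigma> K (n-j)
    = C^2 * K * (1 + 1/\<sigma>) * \<sigma>^2 * ((\<sigma>/\<sigma>')^2)^j * (fact j * fact (n-j-1) / fact (n+1))^2"
proof -
  define k where "k = n - j - 1"
  have nk: "n = j + k + 1" using jn unfolding k_def by simp
  have nj: "n - j = Suc k" using nk by simp
  have ch: "real (n choose j) = fact n / (fact j * fact (Suc k))"
  proof -
    have "fact j * fact (n - j) * (n choose j) = (fact n :: real)"
      using binomial_fact_lemma[of j n] jn by (metis less_imp_le of_nat_fact of_nat_mult)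
    then have e: "(fact j * fact (Suc k)) * real (n choose j) = (fact n :: real)" unfolding nj by (simp add: ac_simps del: fact_Suc)
    have p: "fact j * fact (Suc k) > (0::real)" by (simp del: fact_Suc)
    show ?thesis using e p by (simp add: eq_divide_eq ac_simps del: fact_Suc)
  qed
  have ccn: "cc \<sigma> n = \<sigma>^(2*j) * \<sigma>^(2*k) * \<sigma>^2 / ((fact n)^2 * (fact (n+1))^2)"
  proof -
    have "2*n = 2*j + 2*k + 2" using nk by simp
    then have p: "\<sigma>^(2*n) = \<sigma>^(2*j) * \<sigma>^(2*k) * \<sigma>^2" by (simp only: power_add)
    show ?thesis by (simp only: cc_def p)
  qed
  have Pmk: "Pm \<sigma> K (n-j) = K * (1 + 1/\<sigma>) / (\<sigma>^(2*k) / ((fact k)^2 * (fact (Suc k))^2))"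
    unfolding Pm_def nj cc_def by simp
  have rho: "((\<sigma>/\<sigma>')^2)^j = \<sigma>^(2*j) / (\<sigma>'^j)^2"
    by (simp add: power_divide power_mult[symmetric] power_mult_distrib mult.commute)
  show ?thesis
    unfolding ccn ch Pmk rho k_def[symmetric]
    by (rule field_id) (use s s' in auto)
qed

lemma ratio_bound:
  assumes jn: "j < n"
  shows "(fact j * fact (n-j-1) / fact (n+1) :: real)^2 \<le> 1 / (real n * (real n + 1))^2"
proof -
  define k where "k = n - j - 1"
  have nk: "n = Suc (j + k)" using jn unfolding k_def by simp
  have f1: "(fact (n+1) :: real) = (real n + 1) * real n * fact (j+k)"
    unfolding nk by (simp add: algebra_simps)
  have le: "fact j * fact k \<le> (fact (j+k) :: real)" by (rule fact_mult_le)
  have pos: "(0::real) < real n" using jn by simp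
  have "fact j * fact k / fact (n+1) \<le> fact (j+k) / ((real n + 1) * real n * fact (j+k))"
    unfolding f1 by (rule divide_right_mono[OF le]) (use pos in simp)
  also have "\<dots> = (1::real) / (real n * (real n + 1))" using pos by simp
  finally have "fact j * fact k / fact (n+1) \<le> (1::real) / (real n * (real n + 1))" .
  moreover have "0 \<le> (fact j * fact k / fact (n+1) :: real)" by simp
  ultimately have "(fact j * fact k / fact (n+1) :: real)^2 \<le> (1 / (real n * (real n + 1)))^2"
    by (intro power_mono) auto
  then show ?thesis unfolding k_def[symmetric] by (simp add: power_divide)
qed

lemma last_term:
  assumes s: "\<sigma> > 0" and s': "\<sigma>' > 0"
  shows "cc \<sigma> n * (real (n choose n))^2 * (C * (fact n)^2 / \<sigma>'^n)^2 * Pm \<sigma> K (n-n)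
    = C^2 * ((1+K)/2)^2 * ((\<sigma>/\<sigma>')^2)^n / (real n + 1)^2"
proof -
  have rho: "((\<sigma>/\<sigma>')^2)^n = \<sigma>^(2*n) / (\<sigma>'^n)^2"
    by (simp add: power_divide power_mult[symmetric] power_mult_distrib mult.commute)
  have f1: "(fact (n+1) :: real) = (real n + 1) * fact n" by simp
  have gen: "S / (N^2 * (M * N)^2) * 1 * (C * N^2 / T)^2 * P = C^2 * P * (S / T^2) / M^2"
    if "N > 0" "T > 0" "M > 0" for S N T M P :: real
    using that by (simp add: field_simps power2_eq_square)
  have M: "real n + 1 > 0" by simp
  show ?thesis unfolding cc_def rho Pm_def f1
    by (simp only: binomial_n_n of_nat_1 power_one diff_self_eq_0 if_True gen[OF fact_gt_zero zero_less_power[OF s'] M]) simp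
qed

lemma fin_ineq:
  fixes n :: real
  assumes n: "n > 0" and s: "\<sigma> > 0" and A: "A \<ge> 0" and B: "B \<ge> 0" and q: "q \<ge> 0"
  shows "(1 + n/\<sigma> + \<sigma>) * (n+1) * (A/(n*(n+1))^2 + B*q/(n+1)^2) \<le> (1 + 1/\<sigma> + \<sigma>) * (A * inverse (n^2) + B*q)"
proof -
  have gen: "L * M * (A/(n*M)^2 + B*q/M^2) = (L/M) * (A * inverse (n^2) + B*q)" if "M > 0" for L M :: real
    using that n by (simp add: field_simps power2_eq_square)
  have e: "(1 + n/\<sigma> + \<sigma>) * (n+1) * (A/(n*(n+1))^2 + B*q/(n+1)^2) = ((1 + n/\<sigma> + \<sigma>)/(n+1)) * (A * inverse (n^2) + B*q)"
    by (rule gen) (use n in simp)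
  have "(1 + n/\<sigma> + \<sigma>) \<le> (1 + 1/\<sigma> + \<sigma>) * (n+1)"
  proof -
    have "n/\<sigma> \<le> (1 + 1/\<sigma> + \<sigma>) * n + 1/\<sigma>"
    proof -
      have "n/\<sigma> = (1/\<sigma>) * n" by simp
      also have "\<dots> \<le> (1 + 1/\<sigma> + \<sigma>) * n" using n s by (intro mult_right_mono) auto
      moreover have "0 < 1/\<sigma>" using s by simp
      ultimately show ?thesis by linarith
    qed
    moreover have "(1 + 1/\<sigma> + \<sigma>) * (n+1) = (1 + 1/\<sigma> + \<sigma>) * n + (1 + 1/\<sigma> + \<sigma>)"
      by (simp add: distrib_left)
    ultimately show ?thesis by linarith
  qed
  then have "(1 + n/\<sigma> + \<sigma>)/(n+1) \<le> 1 + 1/\<sigma> + \<sigma>" using n by (simp add: divide_le_eq)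
  moreover have "0 \<le> A * inverse (n^2) + B*q" using A B q n by simp
  ultimately show ?thesis unfolding e by (intro mult_right_mono) auto
qed

lemma geom_le: fixes q :: real assumes "0 \<le> q" "q < 1" shows "(\<Sum>j<n. q^j) \<le> 1/(1-q)"
proof -
  have "(\<Sum>j<n. q^j) = (1 - q^n)/(1-q)" using assms by (simp add: sum_gp_strict)
  also have "\<dots> \<le> 1/(1-q)" using assms by (intro divide_right_mono) auto
  finally show ?thesis .
qed

lemma gam_bound_n:
  assumes s: "0 < \<sigma>" and ss: "\<sigma> < \<sigma>'" and K: "K \<ge> 0" and n: "n \<ge> 1"
  defines "q \<equiv> (\<sigma>/\<sigma>')^2"
  shows "gam \<sigma> (\<lambda>j. C * (fact j)^2 / \<sigma>'^j) K n \<le>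
     (1 + 1/\<sigma> + \<sigma>) * ((C^2 * K * (1 + 1/\<sigma>) * \<sigma>^2 / (1 - q)) * inverse ((real n)^2) + C^2 * ((1+K)/2)^2 * q^n)"
proof -
  have s': "\<sigma>' > 0" using s ss by linarith
  have q0: "0 \<le> q" unfolding q_def by simp
  have q1: "q < 1" unfolding q_def using s ss by (simp add: power_less_one_iff abs_less_iff)
  define Fb where "Fb j = C * (fact j)^2 / \<sigma>'^j" for j
  define t where "t j = cc \<sigma> n * (real (n choose j))^2 * (Fb j)^2 * Pm \<sigma> K (n-j)" for j
  define L where "L = (1 + real n/\<sigma> + \<sigma>) * (real n + 1)"
  define A0 where "A0 = C^2 * K * (1 + 1/\<sigma>) * \<sigma>^2"
  define B0 where "B0 = C^2 * ((1+K)/2)^2"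
  have A0: "A0 \<ge> 0" unfolding A0_def using K s by simp
  have L: "L \<ge> 0" unfolding L_def using s by simp
  have g: "gam \<sigma> Fb K n = L * (\<Sum>j<n. t j) + L * t n"
  proof -
    have "gam \<sigma> Fb K n = L * (\<Sum>j=0..n. t j)"
      unfolding gam_def L_def t_def by (simp add: sum_distrib_left mult.assoc)
    also have "(\<Sum>j=0..n. t j) = (\<Sum>j<n. t j) + t n"
      by (simp add: atLeast0AtMost lessThan_Suc_atMost[symmetric])
    finally show ?thesis by (simp add: distrib_left)
  qed
  have tj: "t j \<le> A0 * q^j / (real n * (real n + 1))^2" if "j < n" for j
  proof -
    have "t j = A0 * q^j * (fact j * fact (n-j-1) / fact (n+1))^2"
      unfolding t_def Fb_def A0_def q_def using term_bound[OF s s' that, of C K] by simp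
    also have "\<dots> \<le> A0 * q^j * (1 / (real n * (real n + 1))^2)"
      by (intro mult_left_mono ratio_bound that) (use A0 q0 in auto)
    finally show ?thesis by simp
  qed
  have S1: "(\<Sum>j<n. t j) \<le> A0 / (1 - q) / (real n * (real n + 1))^2"
  proof -
    have "(\<Sum>j<n. t j) \<le> (\<Sum>j<n. A0 / (real n * (real n + 1))^2 * q^j)"
      by (rule sum_mono) (use tj in simp)
    also have "\<dots> = A0 / (real n * (real n + 1))^2 * (\<Sum>j<n. q^j)" by (simp add: sum_distrib_left)
    also have "\<dots> \<le> A0 / (real n * (real n + 1))^2 * (1/(1-q))"
      by (intro mult_left_mono geom_le q0 q1) (use A0 in simp)
    finally show ?thesis by (simp add: mult.commute)
  qed
  have tn: "t n = B0 * q^n / (real n + 1)^2"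
    unfolding t_def Fb_def B0_def q_def using last_term[OF s s', of n C K] by simp
  have "gam \<sigma> Fb K n \<le> L * (A0 / (1 - q) / (real n * (real n + 1))^2 + B0 * q^n / (real n + 1)^2)"
    unfolding g tn distrib_left[symmetric] by (intro mult_left_mono L) (use S1 in simp)
  also have "\<dots> \<le> (1 + 1/\<sigma> + \<sigma>) * ((A0 / (1 - q)) * inverse ((real n)^2) + B0 * q^n)"
    unfolding L_def
    by (rule fin_ineq) (use n s A0 q0 q1 in \<open>auto simp: B0_def\<close>)
  finally show ?thesis unfolding Fb_def A0_def B0_def by simp
qed

lemma Pm_nonneg: assumes "\<sigma> > 0" "K \<ge> 0" shows "0 \<le> Pm \<sigma> K m"
  unfolding Pm_def using assms cc_pos[OF assms(1), of "m-1"]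
  by (auto intro!: divide_nonneg_pos mult_nonneg_nonneg add_nonneg_nonneg)

lemma gam_summable:
  assumes s: "0 < \<sigma>" and ss: "\<sigma> < \<sigma>'" and K: "K \<ge> 0"
  shows "summable (gam \<sigma> (\<lambda>j. C * (fact j)^2 / \<sigma>'^j) K)"
proof -
  define q where "q = (\<sigma>/\<sigma>')^2"
  have q0: "0 \<le> q" unfolding q_def by simp
  have q1: "q < 1" unfolding q_def using s ss by (simp add: power_less_one_iff abs_less_iff)
  have pos: "0 \<le> gam \<sigma> (\<lambda>j. C * (fact j)^2 / \<sigma>'^j) K n" for n
    unfolding gam_def using s K cc_pos[OF s, of n]
    by (intro mult_nonneg_nonneg sum_nonneg) (auto intro: less_imp_le[OF cc_pos[OF s]] Pm_nonneg[OF s K])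
  have sm: "summable (\<lambda>n. (1 + 1/\<sigma> + \<sigma>) * ((C^2 * K * (1 + 1/\<sigma>) * \<sigma>^2 / (1 - q)) * inverse ((real n)^2) + C^2 * ((1+K)/2)^2 * q^n))"
    by (intro summable_mult summable_add summable_geometric inverse_power_summable) (use q0 q1 in auto)
  show ?thesis
    by (rule summable_comparison_test'[OF sm, of 1])
       (use pos gam_bound_n[OF s ss K] in \<open>auto simp: q_def\<close>)
qed

lemma gterm_nonneg:
  assumes s: "\<sigma> > 0" and v: "smooth01 v"
  shows "0 \<le> gterm \<sigma> k l v n"
proof -
  have "0 \<le> integral {0..1} (\<lambda>x. (x/\<sigma>) ^ k * (dn v n x)^2)"
    by (rule integral_nonneg) (use s in \<open>auto intro!: cont_int continuous_intros dn_cont[OF v]\<close>)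
  then show ?thesis unfolding gterm_def by (simp add: zero_le_power)
qed

lemma le_suminf: assumes "summable f" "\<And>n. 0 \<le> f n" shows "f m \<le> suminf (f::nat \<Rightarrow> real)"
  using sum_le_suminf[OF assms(1), of "{m}"] assms(2) by simp

lemma X_h:
  assumes s: "\<sigma> > 0" and u: "u \<in> Xspace \<sigma>"
  shows "smooth01 u" "u 1 = 0"
    "\<And>m. cc \<sigma> m * integral {0..1} (\<lambda>x. (dn u (Suc m) x)^2) \<le> (Xnorm \<sigma> u)^2"
    "\<And>m. \<sigma> * cc \<sigma> m * (dn u (Suc m) 0)^2 \<le> (Xnorm \<sigma> u)^2"
proof -
  have su: "smooth01 u" and u1: "u 1 = 0"
    and S0: "summable (gterm \<sigma> 0 0 (dx u))" and S1: "summable (gterm \<sigma> 1 0 (dx u))"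
    and S2: "summable (gterm \<sigma> 2 0 (dx u))" and Sb: "summable (bterm \<sigma> (dx u))"
    using u unfolding Xspace_def by auto
  show "smooth01 u" "u 1 = 0" using su u1 by auto
  have sd: "smooth01 (dx u)" by (rule smooth_dx(1)[OF su])
  have n0: "\<And>n. 0 \<le> gterm \<sigma> 0 0 (dx u) n" "\<And>n. 0 \<le> gterm \<sigma> 1 0 (dx u) n"
    "\<And>n. 0 \<le> gterm \<sigma> 2 0 (dx u) n" "\<And>n. 0 \<le> bterm \<sigma> (dx u) n"
    using gterm_nonneg[OF s sd] terms_nonneg(3)[OF s sd] by auto
  define T where "T = suminf (gterm \<sigma> 0 0 (dx u)) + suminf (gterm \<sigma> 1 0 (dx u)) +
     suminf (gterm \<sigma> 2 0 (dx u)) + suminf (bterm \<sigma> (dx u))"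
  have p: "0 \<le> suminf (gterm \<sigma> 0 0 (dx u))" "0 \<le> suminf (gterm \<sigma> 1 0 (dx u))"
     "0 \<le> suminf (gterm \<sigma> 2 0 (dx u))" "0 \<le> suminf (bterm \<sigma> (dx u))"
    using suminf_nonneg[OF S0 n0(1)] suminf_nonneg[OF S1 n0(2)] suminf_nonneg[OF S2 n0(3)] suminf_nonneg[OF Sb n0(4)]
    by auto
  have T: "(Xnorm \<sigma> u)^2 = T" unfolding Xnorm_def T_def using p by simp
  fix m
  have e1: "integral {0..1} (\<lambda>x. (dn (dx u) m x)^2) = integral {0..1} (\<lambda>x. (dn u (Suc m) x)^2)"
    by (rule integral_cong) (simp add: smooth_dx(2)[OF su])
  have "gterm \<sigma> 0 0 (dx u) m \<le> T" using le_suminf[OF S0 n0(1), of m] p unfolding T_def by linarith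
  then show "cc \<sigma> m * integral {0..1} (\<lambda>x. (dn u (Suc m) x)^2) \<le> (Xnorm \<sigma> u)^2"
    unfolding T gterm00 e1 .
  have e2: "dn (dx u) m 0 = dn u (Suc m) 0" by (rule smooth_dx(2)[OF su]) simp
  have "bterm \<sigma> (dx u) m \<le> T" using le_suminf[OF Sb n0(4), of m] p unfolding T_def by linarith
  then show "\<sigma> * cc \<sigma> m * (dn u (Suc m) 0)^2 \<le> (Xnorm \<sigma> u)^2"
    unfolding T bterm_eq e2 .
qed

lemma Xnorm_nonneg:
  assumes s: "\<sigma> > 0" and u: "u \<in> Xspace \<sigma>"
  shows "0 \<le> Xnorm \<sigma> u"
proof -
  have su: "smooth01 u"
    and S0: "summable (gterm \<sigma> 0 0 (dx u))" and S1: "summable (gterm \<sigma> 1 0 (dx u))"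
    and S2: "summable (gterm \<sigma> 2 0 (dx u))" and Sb: "summable (bterm \<sigma> (dx u))"
    using u unfolding Xspace_def by auto
  have sd: "smooth01 (dx u)" by (rule smooth_dx(1)[OF su])
  have n0: "\<And>n. 0 \<le> gterm \<sigma> 0 0 (dx u) n" "\<And>n. 0 \<le> gterm \<sigma> 1 0 (dx u) n"
    "\<And>n. 0 \<le> gterm \<sigma> 2 0 (dx u) n" "\<And>n. 0 \<le> bterm \<sigma> (dx u) n"
    using gterm_nonneg[OF s sd] terms_nonneg(3)[OF s sd] by auto
  have p: "0 \<le> suminf (gterm \<sigma> 0 0 (dx u))" "0 \<le> suminf (gterm \<sigma> 1 0 (dx u))"
     "0 \<le> suminf (gterm \<sigma> 2 0 (dx u))" "0 \<le> suminf (bterm \<sigma> (dx u))"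
    using suminf_nonneg[OF S0 n0(1)] suminf_nonneg[OF S1 n0(2)] suminf_nonneg[OF S2 n0(3)] suminf_nonneg[OF Sb n0(4)]
    by auto
  show ?thesis unfolding Xnorm_def using p by simp
qed

lemma good_Y:
  assumes s: "0 < \<sigma>" and ss: "\<sigma> < \<sigma>'" and f: "smooth01 f"
    and fb: "\<And>j x. x \<in> {0..1} \<Longrightarrow> \<bar>dn f j x\<bar> \<le> C * (fact j)^2 / \<sigma>'^j"
    and w: "smooth01 w" and w1: "w 1 = 0" and K: "K \<ge> 0"
    and h1: "\<And>m. cc \<sigma> m * integral {0..1} (\<lambda>x. (dn w (Suc m) x)^2) \<le> K"
    and h2: "\<And>m. \<sigma> * cc \<sigma> m * (dn w (Suc m) 0)^2 \<le> K"
  shows "(\<lambda>x. f x * w x) \<in> Yspace \<sigma>"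
proof -
  define v where "v = (\<lambda>x. f x * w x)"
  have sv: "smooth01 v" unfolding v_def by (rule smooth_mult(1)[OF f w])
  define G where "G = gam \<sigma> (\<lambda>j. C * (fact j)^2 / \<sigma>'^j) K"
  have sG: "summable G" unfolding G_def by (rule gam_summable[OF s ss K])
  have b: "gterm \<sigma> 0 0 v n + gterm \<sigma> 1 0 v n + bterm \<sigma> v n \<le> G n" for n
    unfolding v_def G_def by (rule core[OF s f fb w w1 K h1 h2])
  have nn: "0 \<le> gterm \<sigma> 0 0 v n" "0 \<le> gterm \<sigma> 1 0 v n" "0 \<le> bterm \<sigma> v n" for n
    using terms_nonneg[OF s sv] by auto
  have l: "\<bar>gterm \<sigma> 0 0 v n\<bar> \<le> G n" "\<bar>gterm \<sigma> 1 0 v n\<bar> \<le> G n" "\<bar>bterm \<sigma> v n\<bar> \<le> G n" for n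
    using b[of n] nn[of n] by auto
  have "summable (gterm \<sigma> 0 0 v)"
    by (rule summable_comparison_test'[OF sG, of 0]) (use l in auto)
  moreover have "summable (gterm \<sigma> 1 0 v)"
    by (rule summable_comparison_test'[OF sG, of 0]) (use l in auto)
  moreover have "summable (bterm \<sigma> v)"
    by (rule summable_comparison_test'[OF sG, of 0]) (use l in auto)
  ultimately show ?thesis using sv unfolding Yspace_def v_def by auto
qed

definition good :: "real \<Rightarrow> real \<Rightarrow> (real \<Rightarrow> real) \<Rightarrow> bool" where
  "good \<sigma> K w \<longleftrightarrow> smooth01 w \<and> w 1 = 0 \<and>
     (\<forall>m. cc \<sigma> m * integral {0..1} (\<lambda>x. (dn w (Suc m) x)^2) \<le> K) \<and>
     (\<forall>m. \<sigma> * cc \<sigma> m * (dn w (Suc m) 0)^2 \<le> K)"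

definition Mb :: "real \<Rightarrow> real \<Rightarrow> nat \<Rightarrow> real" where
  "Mb \<sigma> K m = (if m = 0 then (1+K)/2 else (1 + K/(\<sigma> * cc \<sigma> (m-1)))/2 + (1 + K / cc \<sigma> m)/2)"

lemma Mb_nonneg: "\<sigma> > 0 \<Longrightarrow> K \<ge> 0 \<Longrightarrow> 0 \<le> Mb \<sigma> K m"
  unfolding Mb_def using cc_pos[of \<sigma> m] cc_pos[of \<sigma> "m-1"]
  by (auto intro!: add_nonneg_nonneg divide_nonneg_pos mult_pos_pos)

lemma half_sq: "\<bar>y\<bar> \<le> (1 + y^2)/2" for y :: real
  using sum_squares_ge_zero[of "\<bar>y\<bar> - 1" 0] by (auto simp: power2_eq_square algebra_simps abs_mult_self_eq)

lemma abs_half: fixes y A :: real assumes "y^2 \<le> A" shows "\<bar>y\<bar> \<le> (1 + A)/2"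
proof -
  have "(1 + y^2)/2 \<le> (1 + A)/2" using assms by (intro divide_right_mono add_left_mono) auto
  with half_sq[of y] show ?thesis by (rule order_trans)
qed

lemma sup_bound:
  assumes s: "\<sigma> > 0" and g: "good \<sigma> K w" and x: "x \<in> {0..1}"
  shows "\<bar>dn w m x\<bar> \<le> Mb \<sigma> K m"
proof -
  have w: "smooth01 w" and w1: "w 1 = 0"
    and h1: "\<And>m. cc \<sigma> m * integral {0..1} (\<lambda>x. (dn w (Suc m) x)^2) \<le> K"
    and h2: "\<And>m. \<sigma> * cc \<sigma> m * (dn w (Suc m) 0)^2 \<le> K"
    using g unfolding good_def by auto
  show ?thesis
  proof (cases m)
    case 0
    have I1: "integral {0..1} (\<lambda>x. (dn w 1 x)^2) \<le> K" using h1[of 0] by (simp add: cc_0)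
    have "(dn w (Suc 0) has_integral (dn w 0 1 - dn w 0 x)) {x..1}"
      by (rule ftc_dn[OF w]) (use x in auto)
    then have "integral {x..1} (dn w (Suc 0)) = dn w 0 1 - dn w 0 x" by (rule integral_unique)
    moreover have "dn w 0 1 = 0" using dn_0[OF w, of 1] w1 by simp
    moreover have "\<bar>integral {x..1} (dn w (Suc 0))\<bar> \<le> (1 + integral {0..1} (\<lambda>x. (dn w (Suc 0) x)^2)) / 2"
      by (rule abs_int_le[OF dn_cont[OF w]]) (use x in auto)
    ultimately have "\<bar>dn w 0 x\<bar> \<le> (1 + integral {0..1} (\<lambda>x. (dn w (Suc 0) x)^2)) / 2" by simp
    then show ?thesis using I1 0 by (simp add: Mb_def)
  next
    case (Suc k)
    have c: "cc \<sigma> k > 0" "cc \<sigma> (Suc k) > 0" using cc_pos[OF s] by auto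
    have "(dn w (Suc (Suc k)) has_integral (dn w (Suc k) x - dn w (Suc k) 0)) {0..x}"
      by (rule ftc_dn[OF w]) (use x in auto)
    then have e: "dn w (Suc k) x = dn w (Suc k) 0 + integral {0..x} (dn w (Suc (Suc k)))"
      by (simp add: integral_unique)
    have a1: "\<bar>integral {0..x} (dn w (Suc (Suc k)))\<bar> \<le> (1 + integral {0..1} (\<lambda>x. (dn w (Suc (Suc k)) x)^2)) / 2"
      by (rule abs_int_le[OF dn_cont[OF w]]) (use x in auto)
    have "integral {0..1} (\<lambda>x. (dn w (Suc (Suc k)) x)^2) \<le> K / cc \<sigma> (Suc k)"
      using h1[of "Suc k"] c by (simp add: pos_le_divide_eq ac_simps)
    then have "(1 + integral {0..1} (\<lambda>x. (dn w (Suc (Suc k)) x)^2)) / 2 \<le> (1 + K / cc \<sigma> (Suc k)) / 2"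
      by (intro divide_right_mono add_left_mono) simp_all
    with a1 have a2: "\<bar>integral {0..x} (dn w (Suc (Suc k)))\<bar> \<le> (1 + K / cc \<sigma> (Suc k)) / 2"
      by (rule order_trans)
    have "(dn w (Suc k) 0)^2 \<le> K / (\<sigma> * cc \<sigma> k)"
      using h2[of k] c s by (simp add: pos_le_divide_eq ac_simps)
    then have a3: "\<bar>dn w (Suc k) 0\<bar> \<le> (1 + K / (\<sigma> * cc \<sigma> k)) / 2"
      by (rule abs_half)
    have "\<bar>dn w (Suc k) x\<bar> \<le> \<bar>dn w (Suc k) 0\<bar> + \<bar>integral {0..x} (dn w (Suc (Suc k)))\<bar>"
      unfolding e by (rule abs_triangle_ineq)
    from order_trans[OF this add_mono[OF a3 a2]] show ?thesis using Suc by (simp add: Mb_def)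
  qed
qed

lemma lip_bound:
  assumes s: "\<sigma> > 0" and g: "good \<sigma> K w" and x: "x \<in> {0..1}" and y: "y \<in> {0..1}"
  shows "\<bar>dn w m x - dn w m y\<bar> \<le> Mb \<sigma> K (Suc m) * \<bar>x - y\<bar>"
proof -
  have w: "smooth01 w" using g unfolding good_def by auto
  have gen: "\<bar>dn w m b - dn w m a\<bar> \<le> Mb \<sigma> K (Suc m) * (b - a)" if ab: "a \<in> {0..1}" "b \<in> {0..1}" "a \<le> b" for a b
  proof -
    have "(dn w (Suc m) has_integral (dn w m b - dn w m a)) {a..b}"
      by (rule ftc_dn[OF w]) (use ab in auto)
    then have e: "integral {a..b} (dn w (Suc m)) = dn w m b - dn w m a" by (rule integral_unique)
    have "norm (integral {a..b} (dn w (Suc m))) \<le> Mb \<sigma> K (Suc m) * (b - a)"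
    proof (rule integral_bound[OF ab(3)])
      show "continuous_on {a..b} (dn w (Suc m))"
        by (rule continuous_on_subset[OF dn_cont[OF w]]) (use ab in auto)
      fix t assume "t \<in> {a..b}"
      then have "t \<in> {0..1}" using ab by auto
      then show "norm (dn w (Suc m) t) \<le> Mb \<sigma> K (Suc m)" using sup_bound[OF s g] by simp
    qed
    then show ?thesis using e by simp
  qed
  show ?thesis
  proof (cases "y \<le> x")
    case True then show ?thesis using gen[OF y x True] by simp
  next
    case False then show ?thesis using gen[OF x y] by (simp add: abs_minus_commute)
  qed
qed

definition uconv :: "(nat \<Rightarrow> real \<Rightarrow> real) \<Rightarrow> (real \<Rightarrow> real) \<Rightarrow> bool" where
  "uconv h H \<longleftrightarrow> (\<forall>e>0. \<exists>N. \<forall>n\<ge>N. \<forall>x\<in>{0..1}. \<bar>h n x - H x\<bar> < e)"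

lemma uconv_pt: "uconv h H \<Longrightarrow> x \<in> {0..1} \<Longrightarrow> (\<lambda>n. h n x) \<longlonglongrightarrow> H x"
  unfolding uconv_def LIMSEQ_def dist_real_def by blast

lemma extract_sub:
  fixes u :: "nat \<Rightarrow> real \<Rightarrow> real"
  assumes s: "\<sigma> > 0" and K: "K \<ge> 0" and g: "\<And>n. good \<sigma> K (u n)"
  obtains k G where "strict_mono k" "\<And>m. uconv (\<lambda>n. dn (u (k n)) m) (G m)"
proof -
  define P where "P i r \<longleftrightarrow> (\<exists>G. uconv (\<lambda>n. dn (u (r n)) i) G)" for i and r :: "nat \<Rightarrow> nat"
  have sub: "\<exists>k. strict_mono (k :: nat \<Rightarrow> nat) \<and> P i (r \<circ> k)" for i r
  proof -
    define F where "F n = dn (u (r n)) i" for n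
    have M: "norm (F n x) \<le> Mb \<sigma> K i" if "x \<in> {0..1}" for n x
      unfolding F_def using sup_bound[OF s g that] by simp
    have eq: "\<exists>d>0. \<forall>n y. y \<in> {0..1} \<and> norm (x - y) < d \<longrightarrow> norm (F n x - F n y) < e"
      if x: "x \<in> {0..1}" and e: "0 < e" for x e
    proof -
      define L where "L = Mb \<sigma> K (Suc i)"
      have L: "0 \<le> L" unfolding L_def by (rule Mb_nonneg[OF s K])
      define d where "d = e / (L + 1)"
      have d: "d > 0" unfolding d_def using e L by simp
      have "norm (F n x - F n y) < e" if y: "y \<in> {0..1}" "norm (x - y) < d" for n y
      proof -
        have "\<bar>F n x - F n y\<bar> \<le> L * \<bar>x - y\<bar>" unfolding F_def L_def by (rule lip_bound[OF s g x y(1)])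
        also have "\<dots> \<le> L * d" using y L by (intro mult_left_mono) auto
        also have "\<dots> < (L + 1) * d" using d by (simp add: algebra_simps)
        also have "\<dots> = e" unfolding d_def using L by simp
        finally show ?thesis by simp
      qed
      then show ?thesis using d by blast
    qed
    obtain G k where "continuous_on {0..1} G" "strict_mono (k :: nat \<Rightarrow> nat)"
      and c: "\<And>e. 0 < e \<Longrightarrow> \<exists>N. \<forall>n x. n \<ge> N \<and> x \<in> {0..1} \<longrightarrow> norm (F (k n) x - G x) < e"
      using Arzela_Ascoli[of "{0..1::real}" F "Mb \<sigma> K i", OF compact_Icc M eq] by blast
    have "uconv (\<lambda>n. dn (u ((r \<circ> k) n)) i) G"
      unfolding uconv_def
    proof (intro allI impI)
      fix e :: real assume "e > 0"
      then obtain N where "\<forall>n x. n \<ge> N \<and> x \<in> {0..1} \<longrightarrow> norm (F (k n) x - G x) < e" using c by blast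
      then show "\<exists>N. \<forall>n\<ge>N. \<forall>x\<in>{0..1}. \<bar>dn (u ((r \<circ> k) n)) i x - G x\<bar> < e"
        unfolding F_def by (intro exI[of _ N]) auto
    qed
    then show ?thesis unfolding P_def using \<open>strict_mono k\<close> by blast
  qed
  have PP: "P i (r \<circ> k2)"
    if p1: "P i (r \<circ> k1)" and sk: "\<And>j. N \<le> j \<Longrightarrow> \<exists>j'. j \<le> j' \<and> k2 j = k1 j'" for i r k1 k2 N
  proof -
    obtain G where G: "uconv (\<lambda>n. dn (u ((r \<circ> k1) n)) i) G" using p1 unfolding P_def by blast
    have "uconv (\<lambda>n. dn (u ((r \<circ> k2) n)) i) G"
      unfolding uconv_def
    proof (intro allI impI)
      fix e :: real assume e: "e > 0"
      obtain N1 where N1: "\<forall>n\<ge>N1. \<forall>x\<in>{0..1}. \<bar>dn (u ((r \<circ> k1) n)) i x - G x\<bar> < e"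
        using G e unfolding uconv_def by blast
      have "\<forall>n\<ge>max N N1. \<forall>x\<in>{0..1}. \<bar>dn (u ((r \<circ> k2) n)) i x - G x\<bar> < e"
      proof (intro allI impI ballI)
        fix n :: nat and x :: real assume n: "max N N1 \<le> n" and x: "x \<in> {0..1}"
        obtain j' where "n \<le> j'" "k2 n = k1 j'" using sk[of n] n by auto
        then show "\<bar>dn (u ((r \<circ> k2) n)) i x - G x\<bar> < e" using N1 x n by auto
      qed
      then show "\<exists>N. \<forall>n\<ge>N. \<forall>x\<in>{0..1}. \<bar>dn (u ((r \<circ> k2) n)) i x - G x\<bar> < e" by blast
    qed
    then show ?thesis unfolding P_def by blast
  qed
  obtain k where k: "strict_mono (k :: nat \<Rightarrow> nat)" "\<And>i. P i (id \<circ> k)"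
  proof (rule subsequence_diagonalization_lemma[of P id])
    fix i and r :: "nat \<Rightarrow> nat" show "\<exists>k. strict_mono (k::nat\<Rightarrow>nat) \<and> P i (r \<circ> k)" by (rule sub)
  next
    fix i and r :: "nat \<Rightarrow> nat" and k1 k2 :: "nat \<Rightarrow> nat" and N
    assume "P i (r \<circ> k1)" "\<And>j. N \<le> j \<Longrightarrow> \<exists>j'. j \<le> j' \<and> k2 j = k1 j'"
    then show "P i (r \<circ> k2)" by (rule PP)
  next
    fix k :: "nat \<Rightarrow> nat" assume "strict_mono k" "\<And>i. P i (id \<circ> k)" then show thesis by (rule that)
  qed
  have "\<forall>i. \<exists>G. uconv (\<lambda>n. dn (u (k n)) i) G" using k(2) unfolding P_def by simp
  then have "\<exists>G. \<forall>i. uconv (\<lambda>n. dn (u (k n)) i) (G i)" by (rule choice)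
  then obtain G where "\<And>i. uconv (\<lambda>n. dn (u (k n)) i) (G i)" by blast
  then show ?thesis using that k(1) by blast
qed

lemma limit_deriv:
  assumes sm: "\<And>n. smooth01 (v n)" and uc: "\<And>m. uconv (\<lambda>n. dn (v n) m) (G m)"
  shows "is_deriv_seq (G 0) G"
  unfolding is_deriv_seq_def
proof (intro conjI allI ballI)
  fix m and x :: real assume x: "x \<in> {0..1}"
  have "\<exists>g. \<forall>x\<in>{0..1}. (\<lambda>n. dn (v n) m x) \<longlonglongrightarrow> g x \<and> (g has_derivative (*) (G (Suc m) x)) (at x within {0..1})"
  proof (rule has_derivative_sequence[of "{0..1::real}" "\<lambda>n. dn (v n) m" "\<lambda>n x. (*) (dn (v n) (Suc m) x)" "\<lambda>x. (*) (G (Suc m) x)" 0 "G m 0"])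
    show "convex {0..1::real}" by simp
    show "(dn (v n) m has_derivative (*) (dn (v n) (Suc m) y)) (at y within {0..1})" if "y \<in> {0..1}" for n y
      using dn_deriv[OF sm that] unfolding has_field_derivative_def .
    show "(0::real) \<in> {0..1}" by simp
    show "(\<lambda>n. dn (v n) m 0) \<longlonglongrightarrow> G m 0" by (rule uconv_pt[OF uc]) simp
    fix e :: real assume e: "e > 0"
    obtain N where N: "\<forall>n\<ge>N. \<forall>x\<in>{0..1}. \<bar>dn (v n) (Suc m) x - G (Suc m) x\<bar> < e"
      using uc[of "Suc m"] e unfolding uconv_def by blast
    show "\<forall>\<^sub>F n in sequentially. \<forall>x\<in>{0..1}. \<forall>h. norm (dn (v n) (Suc m) x * h - G (Suc m) x * h) \<le> e * norm h"
      unfolding eventually_sequentially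
    proof (intro exI[of _ N] allI impI ballI)
      fix n x h assume n: "N \<le> n" and x: "x \<in> {0..(1::real)}"
      have "norm (dn (v n) (Suc m) x * h - G (Suc m) x * h) = \<bar>dn (v n) (Suc m) x - G (Suc m) x\<bar> * \<bar>h\<bar>"
        by (simp add: abs_mult left_diff_distrib[symmetric])
      also have "\<dots> \<le> e * \<bar>h\<bar>" using N n x by (intro mult_right_mono) (auto intro: less_imp_le)
      finally show "norm (dn (v n) (Suc m) x * h - G (Suc m) x * h) \<le> e * norm h" by simp
    qed
  qed
  then obtain g where g: "\<And>y. y \<in> {0..1} \<Longrightarrow> (\<lambda>n. dn (v n) m y) \<longlonglongrightarrow> g y"
    "\<And>y. y \<in> {0..1} \<Longrightarrow> (g has_derivative (*) (G (Suc m) y)) (at y within {0..1})" by blast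
  have eq: "G m y = g y" if "y \<in> {0..1}" for y
    using LIMSEQ_unique[OF uconv_pt[OF uc that] g(1)[OF that]] .
  have "(G m has_derivative (*) (G (Suc m) x)) (at x within {0..1})"
    by (rule has_derivative_transform[OF x _ g(2)[OF x]]) (use eq in auto)
  then show "(G m has_real_derivative G (Suc m) x) (at x within {0..1})"
    unfolding has_field_derivative_def .
qed simp

lemma sq_split: "(a::real)^2 \<le> 2 * (a - b)^2 + 2 * b^2"
  using sum_squares_ge_zero[of "a - 2*b" 0] by (simp add: power2_eq_square algebra_simps)

lemma good_limit:
  assumes s: "\<sigma> > 0" and K: "K \<ge> 0" and g: "\<And>n. good \<sigma> K (v n)"
    and uc: "\<And>m. uconv (\<lambda>n. dn (v n) m) (G m)"
  shows "good \<sigma> (2*K+2) (G 0)" and "\<And>m x. x \<in> {0..1} \<Longrightarrow> dn (G 0) m x = G m x"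
proof -
  have sm: "\<And>n. smooth01 (v n)" using g unfolding good_def by auto
  have D: "is_deriv_seq (G 0) G" by (rule limit_deriv[OF sm uc])
  then have sG: "smooth01 (G 0)" unfolding smooth01_def by blast
  show dG: "\<And>m x. x \<in> {0..1} \<Longrightarrow> dn (G 0) m x = G m x" using dn_eq[OF D] by blast
  have cG: "continuous_on {0..1} (G m)" for m
    using continuous_on_cong[THEN iffD1, OF refl _ dn_cont[OF sG, of m]] dG by auto
  have G1: "G 0 1 = 0"
  proof -
    have "(\<lambda>n. dn (v n) 0 1) \<longlonglongrightarrow> G 0 1" by (rule uconv_pt[OF uc]) simp
    moreover have "dn (v n) 0 1 = 0" for n using dn_0[OF sm, of 1 n] g[of n] unfolding good_def by simp
    ultimately show ?thesis using LIMSEQ_unique[OF _ tendsto_const] by simp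
  qed
  have h12: "cc \<sigma> m * integral {0..1} (\<lambda>x. (G (Suc m) x)^2) \<le> 2*K+2 \<and> \<sigma> * cc \<sigma> m * (G (Suc m) 0)^2 \<le> 2*K+2" for m
  proof -
    define c where "c = cc \<sigma> m"
    have c: "c > 0" unfolding c_def by (rule cc_pos[OF s])
    define e where "e = min 1 (min (1/c) (1/(\<sigma>*c)))"
    have e0: "e > 0" unfolding e_def using c s by simp
    have e1: "e^2 \<le> 1/c" "e^2 \<le> 1/(\<sigma>*c)"
    proof -
      have "e^2 \<le> e" unfolding power2_eq_square using e0 by (intro mult_left_le_one_le) (auto simp: e_def)
      then show "e^2 \<le> 1/c" "e^2 \<le> 1/(\<sigma>*c)" unfolding e_def by auto
    qed
    obtain N where N: "\<forall>n\<ge>N. \<forall>x\<in>{0..1}. \<bar>dn (v n) (Suc m) x - G (Suc m) x\<bar> < e"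
      using uc[of "Suc m"] e0 unfolding uconv_def by blast
    define h where "h = dn (v N) (Suc m)"
    have hg: "\<And>m. c' m * integral {0..1} (\<lambda>x. (dn (v N) (Suc m) x)^2) \<le> K" if "c' = cc \<sigma>" for c'
      using g[of N] that unfolding good_def by auto
    have pt: "(G (Suc m) x)^2 \<le> 2 * e^2 + 2 * (h x)^2" if x: "x \<in> {0..1}" for x
    proof -
      have "\<bar>dn (v N) (Suc m) x - G (Suc m) x\<bar> < e" using N x by blast
      then have "\<bar>G (Suc m) x - h x\<bar> \<le> \<bar>e\<bar>" unfolding h_def using e0 by (simp add: abs_minus_commute)
      then have "(G (Suc m) x - h x)^2 \<le> e^2" by (simp only: abs_le_square_iff)
      then show ?thesis using sq_split[of "G (Suc m) x" "h x"] by linarith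
    qed
    have hc: "continuous_on {0..1} h" unfolding h_def by (rule dn_cont[OF sm])
    have "integral {0..1} (\<lambda>x. (G (Suc m) x)^2) \<le> integral {0..1} (\<lambda>x. 2 * e^2 + 2 * (h x)^2)"
    proof (rule integral_le)
      show "(\<lambda>x. (G (Suc m) x)^2) integrable_on {0..1}" by (intro cont_int continuous_intros cG)
      show "(\<lambda>x. 2 * e^2 + 2 * (h x)^2) integrable_on {0..1}" by (intro cont_int continuous_intros hc)
    qed (use pt in auto)
    also have "\<dots> = 2 * e^2 + 2 * integral {0..1} (\<lambda>x. (h x)^2)"
    proof -
      have i: "(\<lambda>x. 2 * (h x)^2) integrable_on {0..1}" by (intro cont_int continuous_intros hc)
      have "integral {0..1} (\<lambda>x. 2 * e^2 + 2 * (h x)^2) = integral {0..1} (\<lambda>x::real. 2 * e^2) + integral {0..1} (\<lambda>x. 2 * (h x)^2)"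
        by (rule integral_add[OF integrable_const_ivl i])
      then show ?thesis by simp
    qed
    finally have I: "integral {0..1} (\<lambda>x. (G (Suc m) x)^2) \<le> 2 * e^2 + 2 * integral {0..1} (\<lambda>x. (h x)^2)" .
    have hK: "c * integral {0..1} (\<lambda>x. (h x)^2) \<le> K" "\<sigma> * c * (h 0)^2 \<le> K"
      using g[of N] unfolding good_def h_def c_def by auto
    have "c * integral {0..1} (\<lambda>x. (G (Suc m) x)^2) \<le> c * (2 * e^2 + 2 * integral {0..1} (\<lambda>x. (h x)^2))"
      using I c by (intro mult_left_mono) auto
    also have "\<dots> = 2 * (c * e^2) + 2 * (c * integral {0..1} (\<lambda>x. (h x)^2))" by (simp add: algebra_simps)
    also have "\<dots> \<le> 2 * 1 + 2 * K"
    proof -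
      have "c * e^2 \<le> c * (1/c)" using e1 c by (intro mult_left_mono) auto
      then have "c * e^2 \<le> 1" using c by simp
      then show ?thesis using hK by linarith
    qed
    finally have A: "cc \<sigma> m * integral {0..1} (\<lambda>x. (G (Suc m) x)^2) \<le> 2*K+2" unfolding c_def by simp
    have "\<sigma> * c * (G (Suc m) 0)^2 \<le> \<sigma> * c * (2 * e^2 + 2 * (h 0)^2)"
      using pt[of 0] c s by (intro mult_left_mono) auto
    also have "\<dots> = 2 * (\<sigma> * c * e^2) + 2 * (\<sigma> * c * (h 0)^2)" by (simp add: algebra_simps)
    also have "\<dots> \<le> 2 * 1 + 2 * K"
    proof -
      have "(\<sigma> * c) * e^2 \<le> (\<sigma> * c) * (1/(\<sigma> * c))" using e1 c s by (intro mult_left_mono) auto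
      then have "\<sigma> * c * e^2 \<le> 1" using c s by simp
      then show ?thesis using hK by linarith
    qed
    finally have B: "\<sigma> * cc \<sigma> m * (G (Suc m) 0)^2 \<le> 2*K+2" unfolding c_def by simp
    show ?thesis using A B by blast
  qed
  have e1: "integral {0..1} (\<lambda>x. (dn (G 0) (Suc m) x)^2) = integral {0..1} (\<lambda>x. (G (Suc m) x)^2)" for m
    by (rule integral_cong) (simp add: dG)
  show "good \<sigma> (2*K+2) (G 0)"
    unfolding good_def using sG G1 h12 e1 dG[of 0] by auto
qed

lemma good_diff:
  assumes s: "\<sigma> > 0" and a: "good \<sigma> K1 a" and b: "good \<sigma> K2 b"
  shows "good \<sigma> (2*K1+2*K2) (\<lambda>x. a x - b x)"
proof -
  have sa: "smooth01 a" and sb: "smooth01 b" using a b unfolding good_def by auto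
  have d: "\<And>m x. x \<in> {0..1} \<Longrightarrow> dn (\<lambda>x. a x - b x) m x = dn a m x - dn b m x"
    using smooth_diff(2)[OF sa sb] by blast
  have sq: "(p - q)^2 \<le> 2 * p^2 + 2 * q^2" for p q :: real
    using sq_split[of "p - q" "-q"] by simp
  have h1: "cc \<sigma> m * integral {0..1} (\<lambda>x. (dn (\<lambda>x. a x - b x) (Suc m) x)^2) \<le> 2*K1+2*K2" for m
  proof -
    have e: "integral {0..1} (\<lambda>x. (dn (\<lambda>x. a x - b x) (Suc m) x)^2) = integral {0..1} (\<lambda>x. (dn a (Suc m) x - dn b (Suc m) x)^2)"
      by (rule integral_cong) (simp add: d)
    have ca: "continuous_on {0..1} (dn a (Suc m))" and cb: "continuous_on {0..1} (dn b (Suc m))"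
      using dn_cont sa sb by auto
    have ia: "(\<lambda>x. 2 * (dn a (Suc m) x)^2) integrable_on {0..1}" by (intro cont_int continuous_intros ca)
    have ib: "(\<lambda>x. 2 * (dn b (Suc m) x)^2) integrable_on {0..1}" by (intro cont_int continuous_intros cb)
    have "integral {0..1} (\<lambda>x. (dn a (Suc m) x - dn b (Suc m) x)^2) \<le> integral {0..1} (\<lambda>x. 2 * (dn a (Suc m) x)^2 + 2 * (dn b (Suc m) x)^2)"
    proof (rule integral_le)
      show "(\<lambda>x. (dn a (Suc m) x - dn b (Suc m) x)^2) integrable_on {0..1}" by (intro cont_int continuous_intros ca cb)
      show "(\<lambda>x. 2 * (dn a (Suc m) x)^2 + 2 * (dn b (Suc m) x)^2) integrable_on {0..1}" by (intro cont_int continuous_intros ca cb)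
    qed (use sq in auto)
    also have "\<dots> = 2 * integral {0..1} (\<lambda>x. (dn a (Suc m) x)^2) + 2 * integral {0..1} (\<lambda>x. (dn b (Suc m) x)^2)"
      using integral_add[OF ia ib] by simp
    finally have I: "integral {0..1} (\<lambda>x. (dn (\<lambda>x. a x - b x) (Suc m) x)^2) \<le> 2 * integral {0..1} (\<lambda>x. (dn a (Suc m) x)^2) + 2 * integral {0..1} (\<lambda>x. (dn b (Suc m) x)^2)"
      unfolding e .
    have c: "cc \<sigma> m > 0" by (rule cc_pos[OF s])
    have "cc \<sigma> m * integral {0..1} (\<lambda>x. (dn (\<lambda>x. a x - b x) (Suc m) x)^2) \<le> cc \<sigma> m * (2 * integral {0..1} (\<lambda>x. (dn a (Suc m) x)^2) + 2 * integral {0..1} (\<lambda>x. (dn b (Suc m) x)^2))"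
      using I c by (intro mult_left_mono) auto
    also have "\<dots> = 2 * (cc \<sigma> m * integral {0..1} (\<lambda>x. (dn a (Suc m) x)^2)) + 2 * (cc \<sigma> m * integral {0..1} (\<lambda>x. (dn b (Suc m) x)^2))"
      by (simp add: algebra_simps)
    also have "\<dots> \<le> 2*K1+2*K2"
    proof -
      have A: "cc \<sigma> m * integral {0..1} (\<lambda>x. (dn a (Suc m) x)^2) \<le> K1" using a unfolding good_def by blast
      have B: "cc \<sigma> m * integral {0..1} (\<lambda>x. (dn b (Suc m) x)^2) \<le> K2" using b unfolding good_def by blast
      show ?thesis using add_mono[OF mult_left_mono[OF A, of 2] mult_left_mono[OF B, of 2]] by simp
    qed
    finally show ?thesis .
  qed
  have h2: "\<sigma> * cc \<sigma> m * (dn (\<lambda>x. a x - b x) (Suc m) 0)^2 \<le> 2*K1+2*K2" for m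
  proof -
    have c: "\<sigma> * cc \<sigma> m > 0" using cc_pos[OF s] s by simp
    have "\<sigma> * cc \<sigma> m * (dn (\<lambda>x. a x - b x) (Suc m) 0)^2 = \<sigma> * cc \<sigma> m * (dn a (Suc m) 0 - dn b (Suc m) 0)^2"
      by (simp add: d)
    also have "\<dots> \<le> \<sigma> * cc \<sigma> m * (2 * (dn a (Suc m) 0)^2 + 2 * (dn b (Suc m) 0)^2)"
      using c sq by (intro mult_left_mono) auto
    also have "\<dots> = 2 * (\<sigma> * cc \<sigma> m * (dn a (Suc m) 0)^2) + 2 * (\<sigma> * cc \<sigma> m * (dn b (Suc m) 0)^2)"
      by (simp add: algebra_simps)
    also have "\<dots> \<le> 2*K1+2*K2"
    proof -
      have A: "\<sigma> * cc \<sigma> m * (dn a (Suc m) 0)^2 \<le> K1" using a unfolding good_def by blast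
      have B: "\<sigma> * cc \<sigma> m * (dn b (Suc m) 0)^2 \<le> K2" using b unfolding good_def by blast
      show ?thesis using add_mono[OF mult_left_mono[OF A, of 2] mult_left_mono[OF B, of 2]] by simp
    qed
    finally show ?thesis .
  qed
  have "(\<lambda>x. a x - b x) 1 = 0" using a b unfolding good_def by simp
  then show ?thesis unfolding good_def using smooth_diff(1)[OF sa sb] h1 h2 by blast
qed

lemma tannery:
  fixes a :: "nat \<Rightarrow> nat \<Rightarrow> real"
  assumes nn: "\<And>j n. 0 \<le> a j n" and le: "\<And>j n. a j n \<le> g n" and sg: "summable g"
    and lim: "\<And>n. (\<lambda>j. a j n) \<longlonglongrightarrow> 0"
  shows "(\<lambda>j. suminf (a j)) \<longlonglongrightarrow> 0"
proof (rule LIMSEQ_I)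
  fix r :: real assume r: "r > 0"
  have sa: "summable (a j)" for j
    by (rule summable_comparison_test'[OF sg, of 0]) (use nn le in auto)
  obtain N where N: "\<forall>n\<ge>N. norm (\<Sum>i. g (i + n)) < r/2" using suminf_exist_split[OF _ sg, of "r/2"] r by auto
  have "(\<lambda>j. \<Sum>i<N. a j i) \<longlonglongrightarrow> (\<Sum>i<N. (0::real))" by (intro tendsto_sum lim)
  then have "(\<lambda>j. \<Sum>i<N. a j i) \<longlonglongrightarrow> 0" by simp
  then obtain J where J: "\<forall>j\<ge>J. norm (\<Sum>i<N. a j i) < r/2" using r LIMSEQ_D[of _ 0 "r/2"] by fastforce
  show "\<exists>no. \<forall>j\<ge>no. norm (suminf (a j) - 0) < r"
  proof (intro exI allI impI)
    fix j assume j: "J \<le> j"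
    have sp: "suminf (a j) = (\<Sum>i. a j (i + N)) + (\<Sum>i<N. a j i)" by (rule suminf_split_initial_segment[OF sa])
    have s1: "summable (\<lambda>i. a j (i + N))" using sa by (simp add: summable_iff_shift)
    have s2: "summable (\<lambda>i. g (i + N))" using sg by (simp add: summable_iff_shift)
    have t1: "(\<Sum>i. a j (i + N)) \<le> (\<Sum>i. g (i + N))" by (rule suminf_le[OF _ s1 s2]) (use le in auto)
    have t2: "(\<Sum>i. g (i + N)) < r/2" using N by auto
    have t3: "(\<Sum>i<N. a j i) < r/2" using J j by auto
    have t4: "0 \<le> suminf (a j)" by (rule suminf_nonneg[OF sa]) (use nn in auto)
    show "norm (suminf (a j) - 0) < r" using sp t1 t2 t3 t4 by simp
  qed
qed

lemma uconv_leib: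
  assumes fb: "\<And>j x. x \<in> {0..1} \<Longrightarrow> \<bar>dn f j x\<bar> \<le> Fb j"
    and uc: "\<And>m. uconv (\<lambda>j. dn (w j) m) (\<lambda>x. 0)"
  shows "uconv (\<lambda>j. leib (dn f) (dn (w j)) n) (\<lambda>x. 0)"
  unfolding uconv_def
proof (intro allI impI)
  fix e :: real assume e: "e > 0"
  define A where "A = (\<Sum>i=0..n. real (n choose i) * Fb i)"
  have Fb0: "0 \<le> Fb i" for i using fb[of 0 i] by (meson abs_ge_zero atLeastAtMost_iff order_trans zero_le_one order_refl)
  have A0: "0 \<le> A" unfolding A_def using Fb0 by (intro sum_nonneg) auto
  define e' where "e' = e / (A + 1)"
  have e': "e' > 0" unfolding e'_def using e A0 by simp
  have "\<forall>i. \<exists>N. \<forall>j\<ge>N. \<forall>x\<in>{0..1}. \<bar>dn (w j) i x - 0\<bar> < e'"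
    using uc e' unfolding uconv_def by blast
  then obtain Nf where Nf: "\<And>i j x. j \<ge> Nf i \<Longrightarrow> x \<in> {0..1} \<Longrightarrow> \<bar>dn (w j) i x\<bar> < e'"
    by (metis diff_zero)
  define N where "N = (\<Sum>i\<le>n. Nf i)"
  show "\<exists>N. \<forall>j\<ge>N. \<forall>x\<in>{0..1}. \<bar>leib (dn f) (dn (w j)) n x - 0\<bar> < e"
  proof (intro exI[of _ N] allI impI ballI)
    fix j :: nat and x :: real assume j: "N \<le> j" and x: "x \<in> {0..1}"
    have bnd: "\<bar>real (n choose i) * dn f i x * dn (w j) (n-i) x\<bar> \<le> real (n choose i) * Fb i * e'" if i: "i \<in> {0..n}" for i
    proof -
      have "Nf (n-i) \<le> N" unfolding N_def by (rule member_le_sum) auto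
      then have "\<bar>dn (w j) (n-i) x\<bar> \<le> e'" using Nf[of "n-i" j x] j x by auto
      then have "\<bar>dn f i x\<bar> * \<bar>dn (w j) (n-i) x\<bar> \<le> Fb i * e'"
        using fb[OF x, of i] by (intro mult_mono) auto
      then show ?thesis by (simp add: abs_mult mult.assoc mult_left_mono)
    qed
    have "\<bar>leib (dn f) (dn (w j)) n x\<bar> \<le> (\<Sum>i=0..n. \<bar>real (n choose i) * dn f i x * dn (w j) (n-i) x\<bar>)"
      unfolding leib_def by (rule sum_abs)
    also have "\<dots> \<le> (\<Sum>i=0..n. real (n choose i) * Fb i * e')" by (rule sum_mono) (rule bnd)
    also have "\<dots> = A * e'" unfolding A_def by (simp add: sum_distrib_right)
    also have "\<dots> < e"
    proof -
      have "A * e' = e * (A / (A + 1))" unfolding e'_def by simp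
      also have "\<dots> < e * 1" using e A0 by (intro mult_strict_left_mono) auto
      finally show ?thesis by simp
    qed
    finally show "\<bar>leib (dn f) (dn (w j)) n x - 0\<bar> < e" by simp
  qed
qed

lemma int_sq_tendsto0:
  assumes uc: "uconv h (\<lambda>x. 0)" and hc: "\<And>j. continuous_on {0..1} (h j)"
  shows "(\<lambda>j. integral {0..1} (\<lambda>x. (h j x)^2)) \<longlonglongrightarrow> 0"
proof (rule LIMSEQ_I)
  fix r :: real assume r: "r > 0"
  define e where "e = min 1 (r/2)"
  have e: "e > 0" "e \<le> 1" "e < r" unfolding e_def using r by auto
  obtain N where N: "\<forall>j\<ge>N. \<forall>x\<in>{0..1}. \<bar>h j x - 0\<bar> < e" using uc e unfolding uconv_def by blast
  show "\<exists>no. \<forall>j\<ge>no. norm (integral {0..1} (\<lambda>x. (h j x)^2) - 0) < r"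
  proof (intro exI[of _ N] allI impI)
    fix j assume j: "N \<le> j"
    have pt: "(h j x)^2 \<le> e" if x: "x \<in> {0..1}" for x
    proof -
      have hx: "\<bar>h j x\<bar> < e" using N j x by auto
      have "(h j x)^2 = \<bar>h j x\<bar> * \<bar>h j x\<bar>" by (simp add: power2_eq_square abs_mult_self_eq)
      also have "\<dots> \<le> \<bar>h j x\<bar> * 1" using hx e by (intro mult_left_mono) auto
      finally show ?thesis using hx by simp
    qed
    have "integral {0..1} (\<lambda>x. (h j x)^2) \<le> integral {0..1} (\<lambda>x::real. e)"
    proof (rule integral_le)
      show "(\<lambda>x. (h j x)^2) integrable_on {0..1}" by (intro cont_int continuous_intros hc)
    qed (use pt in auto)
    then have "integral {0..1} (\<lambda>x. (h j x)^2) \<le> e" by simp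
    moreover have "0 \<le> integral {0..1} (\<lambda>x. (h j x)^2)" by (rule int_sq_nonneg[OF hc])
    ultimately show "norm (integral {0..1} (\<lambda>x. (h j x)^2) - 0) < r" using e by simp
  qed
qed

lemma terms_tendsto:
  assumes s: "\<sigma> > 0" and f: "smooth01 f" and fb: "\<And>j x. x \<in> {0..1} \<Longrightarrow> \<bar>dn f j x\<bar> \<le> Fb j"
    and w: "\<And>j. smooth01 (w j)" and uc: "\<And>m. uconv (\<lambda>j. dn (w j) m) (\<lambda>x. 0)"
  shows "(\<lambda>j. gterm \<sigma> 0 0 (\<lambda>x. f x * w j x) n + gterm \<sigma> 1 0 (\<lambda>x. f x * w j x) n + bterm \<sigma> (\<lambda>x. f x * w j x) n) \<longlonglongrightarrow> 0"
proof -
  define v where "v j = (\<lambda>x. f x * w j x)" for j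
  have sv: "smooth01 (v j)" for j unfolding v_def by (rule smooth_mult(1)[OF f w])
  define h where "h j = dn (v j) n" for j
  have hc: "continuous_on {0..1} (h j)" for j unfolding h_def by (rule dn_cont[OF sv])
  have ul: "uconv (\<lambda>j. leib (dn f) (dn (w j)) n) (\<lambda>x. 0)" by (rule uconv_leib[OF fb uc])
  have uh: "uconv h (\<lambda>x. 0)"
    unfolding uconv_def
  proof (intro allI impI)
    fix e :: real assume "e > 0"
    then obtain N where N: "\<forall>j\<ge>N. \<forall>x\<in>{0..1}. \<bar>leib (dn f) (dn (w j)) n x - 0\<bar> < e"
      using ul unfolding uconv_def by blast
    have "\<forall>j\<ge>N. \<forall>x\<in>{0..1}. \<bar>h j x - 0\<bar> < e"
      unfolding h_def v_def using N smooth_mult(2)[OF f w] by simp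
    then show "\<exists>N. \<forall>j\<ge>N. \<forall>x\<in>{0..1}. \<bar>h j x - 0\<bar> < e" by blast
  qed
  have I: "(\<lambda>j. integral {0..1} (\<lambda>x. (h j x)^2)) \<longlonglongrightarrow> 0" by (rule int_sq_tendsto0[OF uh hc])
  have d: "(\<lambda>j. h j 0) \<longlonglongrightarrow> 0" using uconv_pt[OF uh, of 0] by simp
  define U where "U j = cc \<sigma> n * integral {0..1} (\<lambda>x. (h j x)^2) + cc \<sigma> n * real n * ((1/\<sigma>) * integral {0..1} (\<lambda>x. (h j x)^2)) + \<sigma> * cc \<sigma> n * (h j 0)^2" for j
  have U: "U \<longlonglongrightarrow> 0"
  proof -
    have "U \<longlonglongrightarrow> cc \<sigma> n * 0 + cc \<sigma> n * real n * ((1/\<sigma>) * 0) + \<sigma> * cc \<sigma> n * 0^2"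
      unfolding U_def by (intro tendsto_intros I d)
    then show ?thesis by simp
  qed
  have c: "cc \<sigma> n > 0" by (rule cc_pos[OF s])
  have low: "0 \<le> gterm \<sigma> 0 0 (v j) n + gterm \<sigma> 1 0 (v j) n + bterm \<sigma> (v j) n" for j
    using terms_nonneg[OF s sv, of j n] by linarith
  have up: "gterm \<sigma> 0 0 (v j) n + gterm \<sigma> 1 0 (v j) n + bterm \<sigma> (v j) n \<le> U j" for j
  proof -
    have "integral {0..1} (\<lambda>x. (x/\<sigma>) * (h j x)^2) \<le> (1/\<sigma>) * integral {0..1} (\<lambda>x. (h j x)^2)"
      by (rule int_w_bounds(2)[OF hc s])
    then have "cc \<sigma> n * real n * integral {0..1} (\<lambda>x. (x/\<sigma>) * (h j x)^2) \<le> cc \<sigma> n * real n * ((1/\<sigma>) * integral {0..1} (\<lambda>x. (h j x)^2))"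
      using c by (intro mult_left_mono) auto
    then show ?thesis unfolding U_def gterm00 gterm10 bterm_eq h_def by linarith
  qed
  show ?thesis unfolding v_def[symmetric]
    by (rule real_tendsto_sandwich[OF _ _ tendsto_const U]) (use low up in \<open>auto intro!: always_eventually\<close>)
qed

lemma extract_ex:
  fixes u :: "nat \<Rightarrow> real \<Rightarrow> real"
  assumes s: "\<sigma> > 0" and K: "K \<ge> 0" and g: "\<And>n. good \<sigma> K (u n)"
  shows "\<exists>k G. strict_mono k \<and> (\<forall>m. uconv (\<lambda>n. dn (u (k n)) m) (G m))"
proof -
  obtain k G where "strict_mono k" "\<And>m. uconv (\<lambda>n. dn (u (k n)) m) (G m)"
    using extract_sub[of \<sigma> K u, OF s K g] by blast
  then show ?thesis by blast
qed

lemma good_mono: assumes "good \<sigma> K1 w" "K1 \<le> K2" shows "good \<sigma> K2 w"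
  using assms unfolding good_def by (meson order_trans)

theorem mainTheorem5:
  fixes \<sigma> \<sigma>' :: real and f :: "real \<Rightarrow> real"
  assumes "\<sigma> > 0" and "\<sigma>' > \<sigma>" and "gevrey \<sigma>' 2 f"
  shows "compact_XY \<sigma> (\<lambda>u x. f x * u x)"
proof -
  have s: "\<sigma> > 0" and ss: "\<sigma> < \<sigma>'" using assms by auto
  have s': "\<sigma>' > 0" using s ss by linarith
  obtain C where C: "C > 0" and sf: "smooth01 f"
    and fb: "\<And>n x. x \<in> {0..1} \<Longrightarrow> \<bar>dn f n x\<bar> \<le> C * (fact n)^2 / \<sigma>'^n"
    using gev_bound[OF assms(3) s'] by blast
  define Fb where "Fb n = C * (fact n)^2 / \<sigma>'^n" for n
  have fb': "\<And>n x. x \<in> {0..1} \<Longrightarrow> \<bar>dn f n x\<bar> \<le> Fb n" unfolding Fb_def by (rule fb)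
  have goodX: "good \<sigma> ((Xnorm \<sigma> u)^2) u" if "u \<in> Xspace \<sigma>" for u
    unfolding good_def using X_h[OF s that] by blast
  have part1: "\<forall>u\<in>Xspace \<sigma>. (\<lambda>x. f x * u x) \<in> Yspace \<sigma>"
  proof
    fix u assume u: "u \<in> Xspace \<sigma>"
    have g: "good \<sigma> ((Xnorm \<sigma> u)^2) u" by (rule goodX[OF u])
    show "(\<lambda>x. f x * u x) \<in> Yspace \<sigma>"
      by (rule good_Y[OF s ss sf fb, of u "(Xnorm \<sigma> u)^2"]) (use g in \<open>auto simp: good_def\<close>)
  qed
  have part2: "\<exists>r v. strict_mono r \<and> v \<in> Yspace \<sigma> \<and> (\<lambda>j. Ynorm \<sigma> (\<lambda>x. f x * u (r j) x - v x)) \<longlonglongrightarrow> 0"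
    if ub: "\<forall>n. u n \<in> Xspace \<sigma> \<and> Xnorm \<sigma> (u n) \<le> B" for u :: "nat \<Rightarrow> real \<Rightarrow> real" and B
  proof -
    define K where "K = B^2"
    have K: "K \<ge> 0" unfolding K_def by simp
    have gu: "good \<sigma> K (u n)" for n
    proof -
      have x0: "0 \<le> Xnorm \<sigma> (u n)" using Xnorm_nonneg[OF s] ub by blast
      have "(Xnorm \<sigma> (u n))^2 \<le> K" unfolding K_def using ub x0 by (intro power_mono) auto
      moreover have "good \<sigma> ((Xnorm \<sigma> (u n))^2) (u n)" using goodX ub by blast
      ultimately show ?thesis using good_mono by blast
    qed
    obtain k G where k: "strict_mono k" and uc0: "\<forall>m. uconv (\<lambda>n. dn (u (k n)) m) (G m)"
      using extract_ex[of \<sigma> K u, OF s K gu] by blast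
    have uc: "\<And>m. uconv (\<lambda>n. dn (u (k n)) m) (G m)" using uc0 by blast
    define U where "U = G 0"
    have gU: "good \<sigma> (2*K+2) U" unfolding U_def by (rule good_limit(1)[of \<sigma> K "\<lambda>n. u (k n)" G, OF s K gu uc])
    have dU: "\<And>m x. x \<in> {0..1} \<Longrightarrow> dn U m x = G m x" unfolding U_def by (rule good_limit(2)[of \<sigma> K "\<lambda>n. u (k n)" G, OF s K gu uc])
    define v where "v = (\<lambda>x. f x * U x)"
    have vY: "v \<in> Yspace \<sigma>" unfolding v_def
      by (rule good_Y[OF s ss sf fb, of U "2*K+2"]) (use gU K in \<open>auto simp: good_def\<close>)
    define w where "w j = (\<lambda>x. u (k j) x - U x)" for j
    define Kw where "Kw = 2*K + 2*(2*K+2)"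
    have Kw: "Kw \<ge> 0" unfolding Kw_def using K by simp
    have gw: "good \<sigma> Kw (w j)" for j unfolding w_def Kw_def by (rule good_diff[OF s gu gU])
    have sw: "smooth01 (w j)" for j using gw[of j] unfolding good_def by auto
    have ucw: "uconv (\<lambda>j. dn (w j) m) (\<lambda>x. 0)" for m
      unfolding uconv_def
    proof (intro allI impI)
      fix e :: real assume "e > 0"
      then obtain N where N: "\<forall>n\<ge>N. \<forall>x\<in>{0..1}. \<bar>dn (u (k n)) m x - G m x\<bar> < e"
        using uc[of m] unfolding uconv_def by blast
      have su: "smooth01 (u (k j))" for j using gu unfolding good_def by auto
      have sU: "smooth01 U" using gU unfolding good_def by auto
      have "\<forall>n\<ge>N. \<forall>x\<in>{0..1}. \<bar>dn (w n) m x - 0\<bar> < e"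
        unfolding w_def using N smooth_diff(2)[OF su sU] dU by simp
      then show "\<exists>N. \<forall>n\<ge>N. \<forall>x\<in>{0..1}. \<bar>dn (w n) m x - 0\<bar> < e" by blast
    qed
    define a where "a j n = gterm \<sigma> 0 0 (\<lambda>x. f x * w j x) n + gterm \<sigma> 1 0 (\<lambda>x. f x * w j x) n + bterm \<sigma> (\<lambda>x. f x * w j x) n" for j n
    have gam_s: "summable (gam \<sigma> Fb Kw)" unfolding Fb_def by (rule gam_summable[OF s ss Kw])
    have a_le: "a j n \<le> gam \<sigma> Fb Kw n" for j n
      unfolding a_def by (rule core[OF s sf fb' sw[of j] _ Kw]) (use gw[of j] in \<open>auto simp: good_def\<close>)
    have swf: "smooth01 (\<lambda>x. f x * w j x)" for j by (rule smooth_mult(1)[OF sf sw])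
    have a_nn: "0 \<le> a j n" for j n
      unfolding a_def using terms_nonneg[OF s swf, of j n] by linarith
    have a_lim: "(\<lambda>j. a j n) \<longlonglongrightarrow> 0" for n
      unfolding a_def by (rule terms_tendsto[OF s sf fb' sw ucw])
    have T: "(\<lambda>j. suminf (a j)) \<longlonglongrightarrow> 0" by (rule tannery[OF a_nn a_le gam_s a_lim])
    have wY: "(\<lambda>x. f x * w j x) \<in> Yspace \<sigma>" for j
      by (rule good_Y[OF s ss sf fb, of "w j" Kw]) (use gw[of j] Kw in \<open>auto simp: good_def\<close>)
    have Yn: "Ynorm \<sigma> (\<lambda>x. f x * u (k j) x - v x) = sqrt (suminf (a j))" for j
    proof -
      have fe: "(\<lambda>x. f x * u (k j) x - v x) = (\<lambda>x. f x * w j x)"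
        unfolding v_def w_def by (simp add: algebra_simps)
      have S: "summable (gterm \<sigma> 0 0 (\<lambda>x. f x * w j x))" "summable (gterm \<sigma> 1 0 (\<lambda>x. f x * w j x))"
        "summable (bterm \<sigma> (\<lambda>x. f x * w j x))" using wY[of j] unfolding Yspace_def by auto
      have "suminf (a j) = suminf (gterm \<sigma> 0 0 (\<lambda>x. f x * w j x)) + suminf (gterm \<sigma> 1 0 (\<lambda>x. f x * w j x)) + suminf (bterm \<sigma> (\<lambda>x. f x * w j x))"
        unfolding a_def using suminf_add[OF summable_add[OF S(1) S(2)] S(3)] suminf_add[OF S(1) S(2)] by simp
      then show ?thesis unfolding fe Ynorm_def by simp
    qed
    have "(\<lambda>j. Ynorm \<sigma> (\<lambda>x. f x * u (k j) x - v x)) \<longlonglongrightarrow> sqrt 0"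
      unfolding Yn by (intro tendsto_intros T)
    then show ?thesis using k vY by auto
  qed
  show ?thesis unfolding compact_XY_def using part1 part2 by blast
qed

end
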